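(* Let $T$ be a regular tournament of odd order $n$, and let $s_5(T)$ be the number of $5$-element vertex subsets of $T$ inducing a strongly connected subtournament. If $n\equiv 3 \pmod 4$, then $$\frac{n(n+1)(n-1)(n-3)(17n-59)}{3840}\le s_5(T),$$ with equality if and only if $T$ is doubly regular or $n=7$ (in which case every regular tournament of order $7$ attains equality). If $n\equiv 1\pmod 4$, then $$\frac{n(n-1)(17n^3-93n^2+127n-243)}{3840}\le s_5(T),$$ with equality if and only if $T$ is nearly doubly regular, or $T$ is isomorphic to $\Delta\cdot\Delta$, or $T$ is isomorphic to one of the two regular tournaments of order $9$ with adjacency matrices $$\begin{pmatrix} 0&1&1&1&1&0&0&0&0\\ 0&0&1&1&1&1&0&0&0\\ 0&0&0&1&0&1&0&1&1\\ 0&0&0&0&1&0&1&1&1\\ 0&0&1&0&0&0&1&1&1\\ 1&0&0&1&1&0&1&0&0\\ 1&1&1&0&0&0&0&1&0\\ 1&1&0&0&0&1&0&0&1\\ 1&1&0&0&0&1&1&0&0\end{pmatrix} \quad\text{and}\quad \begin{pmatrix} 0&1&1&1&1&0&0&0&0\\ 0&0&1&0&1&0&1&1&0\\ 0&0&0&1&1&0&1&0&1\\ 0&1&0&0&0&1&0&1&1\\ 0&0&0&1&0&1&0&1&1\\ 1&1&1&0&0&0&0&0&1\\ 1&0&0&1&1&1&0&0&0\\ 1&0&1&0&0&1&1&0&0\\ 1&1&0&0&0&0&1&1&0\end{pmatrix}.$$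
   Context: A tournament is an orientation of a complete graph; the adjacency matrix has $(i,j)$ entry $1$ iff $i\to j$. A tournament of odd order $n$ is regular if every out-degree is $\delta=\frac{n-1}{2}$. A tournament of even order $m$ is near regular if half its vertices have out-degree $\frac m2$ and half have $\frac m2-1$. For $n\equiv 3\pmod 4$, a regular tournament of order $n$ is doubly regular if the out-set of every vertex induces a regular subtournament (of order $\frac{n-1}{2}$). For $n\equiv 1\pmod 4$, a regular tournament of order $n$ is nearly doubly regular if the out-set of every vertex induces a near regular subtournament. $\Delta$ is the cyclic triple (strong tournament on 3 vertices) and $\Delta\cdot\Delta$ is the tournament of order 9 obtained from $\Delta$ by replacing each vertex by a copy of $\Delta$, with every arc between two distinct copies oriented as the corresponding arc of $\Delta$. *)

theory Defs
  imports Complex_Main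
begin

definition tournament :: "'a set \<Rightarrow> ('a \<Rightarrow> 'a \<Rightarrow> bool) \<Rightarrow> bool" where
  "tournament V A \<longleftrightarrow> finite V \<and> (\<forall>x\<in>V. \<not> A x x) \<and>
     (\<forall>x\<in>V. \<forall>y\<in>V. x \<noteq> y \<longrightarrow> (A x y \<longleftrightarrow> \<not> A y x))"

definition out_set :: "'a set \<Rightarrow> ('a \<Rightarrow> 'a \<Rightarrow> bool) \<Rightarrow> 'a \<Rightarrow> 'a set" where
  "out_set S A x = {y \<in> S. A x y}"

definition outdeg :: "'a set \<Rightarrow> ('a \<Rightarrow> 'a \<Rightarrow> bool) \<Rightarrow> 'a \<Rightarrow> nat" where
  "outdeg S A x = card (out_set S A x)"

definition regular_on :: "'a set \<Rightarrow> ('a \<Rightarrow> 'a \<Rightarrow> bool) \<Rightarrow> bool" where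
  "regular_on S A \<longleftrightarrow> odd (card S) \<and> (\<forall>x\<in>S. outdeg S A x = (card S - 1) div 2)"

definition near_regular_on :: "'a set \<Rightarrow> ('a \<Rightarrow> 'a \<Rightarrow> bool) \<Rightarrow> bool" where
  "near_regular_on S A \<longleftrightarrow> even (card S) \<and>
     card {x \<in> S. outdeg S A x = card S div 2} = card S div 2 \<and>
     card {x \<in> S. outdeg S A x + 1 = card S div 2} = card S div 2"

definition regular_tournament :: "'a set \<Rightarrow> ('a \<Rightarrow> 'a \<Rightarrow> bool) \<Rightarrow> bool" where
  "regular_tournament V A \<longleftrightarrow> tournament V A \<and> regular_on V A"

definition doubly_regular :: "'a set \<Rightarrow> ('a \<Rightarrow> 'a \<Rightarrow> bool) \<Rightarrow> bool" where
  "doubly_regular V A \<longleftrightarrow> regular_tournament V A \<and> card V mod 4 = 3 \<and>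
     (\<forall>v\<in>V. regular_on (out_set V A v) A)"

definition nearly_doubly_regular :: "'a set \<Rightarrow> ('a \<Rightarrow> 'a \<Rightarrow> bool) \<Rightarrow> bool" where
  "nearly_doubly_regular V A \<longleftrightarrow> regular_tournament V A \<and> card V mod 4 = 1 \<and>
     (\<forall>v\<in>V. near_regular_on (out_set V A v) A)"

definition strong_on :: "'a set \<Rightarrow> ('a \<Rightarrow> 'a \<Rightarrow> bool) \<Rightarrow> bool" where
  "strong_on S A \<longleftrightarrow> (\<forall>x\<in>S. \<forall>y\<in>S. (\<lambda>u w. u \<in> S \<and> w \<in> S \<and> A u w)\<^sup>*\<^sup>* x y)"

definition s5 :: "'a set \<Rightarrow> ('a \<Rightarrow> 'a \<Rightarrow> bool) \<Rightarrow> nat" where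
  "s5 V A = card {S. S \<subseteq> V \<and> card S = 5 \<and> strong_on S A}"

definition tourn_iso :: "'a set \<Rightarrow> ('a \<Rightarrow> 'a \<Rightarrow> bool) \<Rightarrow> 'b set \<Rightarrow> ('b \<Rightarrow> 'b \<Rightarrow> bool) \<Rightarrow> bool" where
  "tourn_iso V A W B \<longleftrightarrow> (\<exists>f. bij_betw f V W \<and> (\<forall>x\<in>V. \<forall>y\<in>V. A x y \<longleftrightarrow> B (f x) (f y)))"

text \<open>Delta.Delta: vertices (i,j) with i,j in {0,1,2}; cyclic triple i -> i+1 mod 3.\<close>
definition cyc3 :: "nat \<Rightarrow> nat \<Rightarrow> bool" where
  "cyc3 i j \<longleftrightarrow> j = (i + 1) mod 3"

definition DD_V :: "(nat \<times> nat) set" where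
  "DD_V = {0..2} \<times> {0..2}"

definition DD_A :: "nat \<times> nat \<Rightarrow> nat \<times> nat \<Rightarrow> bool" where
  "DD_A p q \<longleftrightarrow> (if fst p = fst q then cyc3 (snd p) (snd q) else cyc3 (fst p) (fst q))"

definition M1 :: "nat list list" where
  "M1 = [[0,1,1,1,1,0,0,0,0],
         [0,0,1,1,1,1,0,0,0],
         [0,0,0,1,0,1,0,1,1],
         [0,0,0,0,1,0,1,1,1],
         [0,0,1,0,0,0,1,1,1],
         [1,0,0,1,1,0,1,0,0],
         [1,1,1,0,0,0,0,1,0],
         [1,1,0,0,0,1,0,0,1],
         [1,1,0,0,0,1,1,0,0]]"

definition M2 :: "nat list list" where
  "M2 = [[0,1,1,1,1,0,0,0,0],
         [0,0,1,0,1,0,1,1,0],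
         [0,0,0,1,1,0,1,0,1],
         [0,1,0,0,0,1,0,1,1],
         [0,0,0,1,0,1,0,1,1],
         [1,1,1,0,0,0,0,0,1],
         [1,0,0,1,1,1,0,0,0],
         [1,0,1,0,0,1,1,0,0],
         [1,1,0,0,0,0,1,1,0]]"

definition mat_rel :: "nat list list \<Rightarrow> nat \<Rightarrow> nat \<Rightarrow> bool" where
  "mat_rel M i j \<longleftrightarrow> M ! i ! j = 1"

end

theory Submission
  imports Defs
begin

definition has_src :: "'a set \<Rightarrow> ('a \<Rightarrow> 'a \<Rightarrow> bool) \<Rightarrow> bool" where
  "has_src S A \<longleftrightarrow> (\<exists>s\<in>S. \<forall>t\<in>S. t \<noteq> s \<longrightarrow> A s t)"
definition has_snk :: "'a set \<Rightarrow> ('a \<Rightarrow> 'a \<Rightarrow> bool) \<Rightarrow> bool" where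
  "has_snk S A \<longleftrightarrow> (\<exists>s\<in>S. \<forall>t\<in>S. t \<noteq> s \<longrightarrow> A t s)"

lemma tourD:
  assumes "tournament V A" "x \<in> V" "y \<in> V" "x \<noteq> y"
  shows "A x y \<longleftrightarrow> \<not> A y x"
  using assms unfolding tournament_def by blast

lemma tour_irr: "tournament V A \<Longrightarrow> x \<in> V \<Longrightarrow> \<not> A x x"
  unfolding tournament_def by blast

lemma tour_fin: "tournament V A \<Longrightarrow> finite V"
  unfolding tournament_def by blast

lemma tour_sub: "tournament V A \<Longrightarrow> S \<subseteq> V \<Longrightarrow> tournament S A"
  unfolding tournament_def by (meson finite_subset subsetD)

lemma tour_flip: "tournament V A \<Longrightarrow> tournament V (\<lambda>x y. A y x)"
  unfolding tournament_def by blast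

lemma src_not_reach:
  assumes T: "tournament S A" and s: "s \<in> S" and src: "\<forall>t\<in>S. t \<noteq> s \<longrightarrow> A s t"
  shows "(\<lambda>u w. u \<in> S \<and> w \<in> S \<and> A u w)\<^sup>*\<^sup>* x y \<Longrightarrow> y = s \<Longrightarrow> x = s"
proof (induction rule: rtranclp.induct)
  case (rtrancl_refl a) then show ?case by simp
next
  case (rtrancl_into_rtrancl a b c)
  then have "b \<in> S" "A b s" by auto
  then show ?case
    using T s src tourD[OF T] tour_irr[OF T] by (metis)
qed

lemma snk_not_reach:
  assumes T: "tournament S A" and s: "s \<in> S" and snk: "\<forall>t\<in>S. t \<noteq> s \<longrightarrow> A t s"
  shows "(\<lambda>u w. u \<in> S \<and> w \<in> S \<and> A u w)\<^sup>*\<^sup>* x y \<Longrightarrow> x = s \<Longrightarrow> y = s"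
proof (induction rule: rtranclp.induct)
  case (rtrancl_refl a) then show ?case by simp
next
  case (rtrancl_into_rtrancl a b c)
  then have "c \<in> S" "A s c" by auto
  then show ?case
    using T s snk tourD[OF T] tour_irr[OF T] by (metis)
qed

lemma small_has_snk:
  assumes T: "tournament S A" "R \<subseteq> S" "R \<noteq> {}" "card R \<le> 2"
  shows "\<exists>r\<in>R. \<forall>t\<in>R. t \<noteq> r \<longrightarrow> A t r"
proof -
  have fin: "finite R" using T tour_fin finite_subset by blast
  have "card R = 1 \<or> card R = 2" using assms fin by (metis card_0_eq le_SucE nat_le_linear numeral_2_eq_2 One_nat_def le_0_eq)
  then show ?thesis
  proof
    assume "card R = 1" then obtain r where "R = {r}" by (auto simp: card_1_singleton_iff)
    then show ?thesis by auto
  next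
    assume "card R = 2" then obtain r1 r2 where R: "R = {r1,r2}" "r1 \<noteq> r2" by (auto simp: card_2_iff)
    then have "A r1 r2 \<or> A r2 r1" using tourD[OF T(1)] T(2) by blast
    then show ?thesis using R by auto
  qed
qed

lemma strong5:
  assumes T: "tournament V A" and S: "S \<subseteq> V" "card S = 5"
  shows "strong_on S A \<longleftrightarrow> \<not> has_src S A \<and> \<not> has_snk S A"
proof -
  have TS: "tournament S A" using tour_sub[OF T S(1)] .
  have finS: "finite S" using TS tour_fin by blast
  let ?R = "\<lambda>u w. u \<in> S \<and> w \<in> S \<and> A u w"
  show ?thesis
  proof
    assume st: "strong_on S A"
    have ex2: "\<And>s. s \<in> S \<Longrightarrow> \<exists>t\<in>S. t \<noteq> s"
    proof -
      fix s assume "s \<in> S"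
      have "card (S - {s}) = 4" using S \<open>s \<in> S\<close> finS by simp
      then have "S - {s} \<noteq> {}" by (metis card.empty zero_neq_numeral)
      then show "\<exists>t\<in>S. t \<noteq> s" by blast
    qed
    show "\<not> has_src S A \<and> \<not> has_snk S A"
    proof
      show "\<not> has_src S A"
      proof
        assume "has_src S A"
        then obtain s where s: "s \<in> S" "\<forall>t\<in>S. t \<noteq> s \<longrightarrow> A s t" unfolding has_src_def by blast
        obtain t where t: "t \<in> S" "t \<noteq> s" using ex2[OF s(1)] by blast
        have "?R\<^sup>*\<^sup>* t s" using st s(1) t(1) unfolding strong_on_def by blast
        then show False using src_not_reach[OF TS s(1) s(2)] t by blast
      qed
      show "\<not> has_snk S A"
      proof
        assume "has_snk S A"
        then obtain s where s: "s \<in> S" "\<forall>t\<in>S. t \<noteq> s \<longrightarrow> A t s" unfolding has_snk_def by blast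
        obtain t where t: "t \<in> S" "t \<noteq> s" using ex2[OF s(1)] by blast
        have "?R\<^sup>*\<^sup>* s t" using st s(1) t(1) unfolding strong_on_def by blast
        then show False using snk_not_reach[OF TS s(1) s(2)] t by blast
      qed
    qed
  next
    assume ns: "\<not> has_src S A \<and> \<not> has_snk S A"
    show "strong_on S A"
      unfolding strong_on_def
    proof (intro ballI, rule ccontr)
      fix x y assume xy: "x \<in> S" "y \<in> S" and nr: "\<not> ?R\<^sup>*\<^sup>* x y"
      define R where "R = {z\<in>S. ?R\<^sup>*\<^sup>* x z}"
      have xR: "x \<in> R" using xy unfolding R_def by auto
      have yR: "y \<in> S - R" using xy nr unfolding R_def by auto
      have cross: "A t r" if "r \<in> R" "t \<in> S - R" for r t
      proof -
        have "\<not> A r t"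
        proof
          assume "A r t"
          then have 1: "?R r t" using that unfolding R_def by auto
          have "?R\<^sup>*\<^sup>* x r" using that(1) unfolding R_def by auto
          then have "?R\<^sup>*\<^sup>* x t" using 1 by (rule rtranclp.rtrancl_into_rtrancl)
          then show False using that unfolding R_def by auto
        qed
        moreover have "r \<noteq> t" "r \<in> S" "t \<in> S" using that unfolding R_def by auto
        ultimately show ?thesis using tourD[OF TS] by blast
      qed
      have RS: "R \<subseteq> S" unfolding R_def by auto
      have cs: "card R + card (S - R) = 5" using S(2) RS finS
        by (metis card_Diff_subset finite_subset le_add_diff_inverse card_mono)
      show False
      proof (cases "card R \<le> 2")
        case True
        obtain r where r: "r \<in> R" "\<forall>t\<in>R. t \<noteq> r \<longrightarrow> A t r"
          using small_has_snk[OF TS RS _ True] xR by blast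
        have "\<forall>t\<in>S. t \<noteq> r \<longrightarrow> A t r"
          using r cross by blast
        then show False using ns r RS unfolding has_snk_def by blast
      next
        case False
        then have c2: "card (S - R) \<le> 2" using cs by linarith
        obtain r where r: "r \<in> S - R" "\<forall>t\<in>S - R. t \<noteq> r \<longrightarrow> A r t"
          using small_has_snk[OF tour_flip[OF TS] _ _ c2] yR by blast
        have "\<forall>t\<in>S. t \<noteq> r \<longrightarrow> A r t"
          using r cross by blast
        then show False using ns r unfolding has_src_def by blast
      qed
    qed
  qed
qed

definition xset :: "'a set \<Rightarrow> ('a \<Rightarrow> 'a \<Rightarrow> bool) \<Rightarrow> 'a \<Rightarrow> 'a \<Rightarrow> 'a set" where
  "xset V A u w = {v\<in>V. A u v \<and> A v w}"

definition arcs :: "'a set \<Rightarrow> ('a \<Rightarrow> 'a \<Rightarrow> bool) \<Rightarrow> ('a \<times> 'a) set" where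
  "arcs V A = (SIGMA u:V. out_set V A u)"

lemma src_unique:
  assumes T: "tournament V A" "S \<subseteq> V" "s \<in> S" "s' \<in> S"
    "\<forall>t\<in>S. t \<noteq> s \<longrightarrow> A s t" "\<forall>t\<in>S. t \<noteq> s' \<longrightarrow> A s' t"
  shows "s = s'"
proof (rule ccontr)
  assume ne: "s \<noteq> s'"
  have "s \<in> V" "s' \<in> V" using T by auto
  then show False using tourD[OF T(1), of s s'] ne T(5,6) T(3,4) by auto
qed

lemma snk_unique:
  assumes T: "tournament V A" "S \<subseteq> V" "s \<in> S" "s' \<in> S"
    "\<forall>t\<in>S. t \<noteq> s \<longrightarrow> A t s" "\<forall>t\<in>S. t \<noteq> s' \<longrightarrow> A t s'"
  shows "s = s'"
proof (rule ccontr)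
  assume ne: "s \<noteq> s'"
  have "s \<in> V" "s' \<in> V" using T by auto
  then show False using tourD[OF T(1), of s s'] ne T(5,6) T(3,4) by auto
qed

lemma count_src:
  assumes T: "tournament V A"
  shows "card {S. S \<subseteq> V \<and> card S = 5 \<and> has_src S A} = (\<Sum>v\<in>V. outdeg V A v choose 4)"
proof -
  have fin: "finite V" using tour_fin[OF T] .
  let ?F = "\<lambda>v. insert v ` {K. K \<subseteq> out_set V A v \<and> card K = 4}"
  have eq: "{S. S \<subseteq> V \<and> card S = 5 \<and> has_src S A} = (\<Union>v\<in>V. ?F v)"
  proof (rule set_eqI, rule iffI)
    fix S assume "S \<in> {S. S \<subseteq> V \<and> card S = 5 \<and> has_src S A}"
    then have S: "S \<subseteq> V" "card S = 5" "has_src S A" by auto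
    then obtain s where s: "s \<in> S" "\<forall>t\<in>S. t \<noteq> s \<longrightarrow> A s t" unfolding has_src_def by blast
    have finS: "finite S" using S fin finite_subset by blast
    have "S - {s} \<subseteq> out_set V A s" using s S unfolding out_set_def by auto
    moreover have "card (S - {s}) = 4" using S s finS by simp
    moreover have "S = insert s (S - {s})" using s by auto
    ultimately have "S \<in> ?F s" by (intro image_eqI[of S _ "S - {s}"]) auto
    then show "S \<in> (\<Union>v\<in>V. ?F v)" using s S by blast
  next
    fix S assume "S \<in> (\<Union>v\<in>V. ?F v)"
    then obtain v K where v: "v \<in> V" "K \<subseteq> out_set V A v" "card K = 4" "S = insert v K" by blast
    have vK: "v \<notin> K" using v tour_irr[OF T] unfolding out_set_def by auto
    have finK: "finite K" using v(3) by (metis card.infinite zero_neq_numeral)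
    have "S \<subseteq> V" using v unfolding out_set_def by auto
    moreover have "card S = 5" using v vK finK by simp
    moreover have "has_src S A" unfolding has_src_def
      using v unfolding out_set_def by auto
    ultimately show "S \<in> {S. S \<subseteq> V \<and> card S = 5 \<and> has_src S A}" by blast
  qed
  have "card (\<Union>v\<in>V. ?F v) = (\<Sum>v\<in>V. card (?F v))"
  proof (rule card_UN_disjoint[OF fin])
    show "\<forall>v\<in>V. finite (?F v)"
    proof
      fix v assume "v \<in> V"
      have "finite (out_set V A v)" using fin unfolding out_set_def by auto
      then show "finite (?F v)" by auto
    qed
    show "\<forall>i\<in>V. \<forall>j\<in>V. i \<noteq> j \<longrightarrow> ?F i \<inter> ?F j = {}"
    proof (intro ballI impI)
      fix i j assume ij: "i \<in> V" "j \<in> V" "i \<noteq> j"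
      show "?F i \<inter> ?F j = {}"
      proof (rule ccontr)
        assume "?F i \<inter> ?F j \<noteq> {}"
        then obtain S where S0: "S \<in> ?F i \<inter> ?F j" by (meson ex_in_conv)
        then have S: "S \<in> ?F i" "S \<in> ?F j" by simp_all
        from S(1) obtain K where K1: "K \<in> {K. K \<subseteq> out_set V A i \<and> card K = 4}" "S = insert i K" by (rule imageE)
        from S(2) obtain K' where K2: "K' \<in> {K. K \<subseteq> out_set V A j \<and> card K = 4}" "S = insert j K'" by (rule imageE)
        have K: "K \<subseteq> out_set V A i" "K' \<subseteq> out_set V A j" "insert i K = insert j K'"
          using K1 K2 by auto
        then have "j \<in> K" "i \<in> K'" using ij by (metis insertE insertI1)+
        then have "A i j" "A j i" using K unfolding out_set_def by auto
        then show False using tourD[OF T ij] by simp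
      qed
    qed
  qed
  also have "\<dots> = (\<Sum>v\<in>V. outdeg V A v choose 4)"
  proof (rule sum.cong[OF refl])
    fix v assume v: "v \<in> V"
    have "inj_on (insert v) {K. K \<subseteq> out_set V A v \<and> card K = 4}"
    proof (rule inj_onI)
      fix K K' assume "K \<in> {K. K \<subseteq> out_set V A v \<and> card K = 4}" "K' \<in> {K. K \<subseteq> out_set V A v \<and> card K = 4}"
        "insert v K = insert v K'"
      moreover have "v \<notin> out_set V A v" using tour_irr[OF T v] unfolding out_set_def by auto
      ultimately show "K = K'" by (metis insert_ident mem_Collect_eq subset_iff)
    qed
    then have "card (?F v) = card {K. K \<subseteq> out_set V A v \<and> card K = 4}" by (rule card_image)
    also have "\<dots> = outdeg V A v choose 4" unfolding outdeg_def
      by (rule n_subsets) (use fin in \<open>simp add: out_set_def\<close>)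
    finally show "card (?F v) = outdeg V A v choose 4" .
  qed
  finally show ?thesis using eq by simp
qed

lemma has_snk_flip: "has_snk S A = has_src S (\<lambda>x y. A y x)"
  unfolding has_snk_def has_src_def by simp

definition indeg :: "'a set \<Rightarrow> ('a \<Rightarrow> 'a \<Rightarrow> bool) \<Rightarrow> 'a \<Rightarrow> nat" where
  "indeg V A v = card {w\<in>V. A w v}"

lemma count_snk:
  assumes T: "tournament V A"
  shows "card {S. S \<subseteq> V \<and> card S = 5 \<and> has_snk S A} = (\<Sum>v\<in>V. indeg V A v choose 4)"
  using count_src[OF tour_flip[OF T]] unfolding has_snk_flip indeg_def outdeg_def out_set_def by simp


lemma count_both:
  assumes T: "tournament V A"
  shows "card {S. S \<subseteq> V \<and> card S = 5 \<and> has_src S A \<and> has_snk S A} =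
         (\<Sum>p\<in>arcs V A. card (xset V A (fst p) (snd p)) choose 3)"
proof -
  have fin: "finite V" using tour_fin[OF T] .
  have finarcs: "finite (arcs V A)" unfolding arcs_def out_set_def using fin by auto
  let ?F = "\<lambda>p. (\<lambda>K. insert (fst p) (insert (snd p) K)) ` {K. K \<subseteq> xset V A (fst p) (snd p) \<and> card K = 3}"
  have eq: "{S. S \<subseteq> V \<and> card S = 5 \<and> has_src S A \<and> has_snk S A} = (\<Union>p\<in>arcs V A. ?F p)"
  proof (rule set_eqI, rule iffI)
    fix S assume "S \<in> {S. S \<subseteq> V \<and> card S = 5 \<and> has_src S A \<and> has_snk S A}"
    then have S: "S \<subseteq> V" "card S = 5" "has_src S A" "has_snk S A" by auto
    obtain u where u: "u \<in> S" "\<forall>t\<in>S. t \<noteq> u \<longrightarrow> A u t" using S unfolding has_src_def by blast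
    obtain w where w: "w \<in> S" "\<forall>t\<in>S. t \<noteq> w \<longrightarrow> A t w" using S unfolding has_snk_def by blast
    have finS: "finite S" using S fin finite_subset by blast
    have "card (S - {u}) = 4" using S u finS by simp
    then have "S - {u} \<noteq> {}" by (metis card.empty zero_neq_numeral)
    then obtain t where t: "t \<in> S" "t \<noteq> u" by blast
    have uw: "u \<noteq> w"
    proof
      assume "u = w"
      then have "A u t" "A t u" using u w t by auto
      moreover have "u \<in> V" "t \<in> V" using S u t by auto
      ultimately show False using tourD[OF T, of u t] t by simp
    qed
    have Auw: "A u w" using u w uw by blast
    define K where "K = S - {u, w}"
    have "K \<subseteq> xset V A u w" using S u w unfolding K_def xset_def by auto
    moreover have "card K = 3" using S u w uw finS unfolding K_def by (simp add: card_Diff_subset)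
    moreover have "S = insert u (insert w K)" using u w unfolding K_def by auto
    moreover have "(u, w) \<in> arcs V A" using Auw S u w unfolding arcs_def out_set_def by auto
    ultimately have "S \<in> ?F (u,w)" by (intro image_eqI[of S _ K]) auto
    then show "S \<in> (\<Union>p\<in>arcs V A. ?F p)" using \<open>(u, w) \<in> arcs V A\<close> by (rule UN_I[rotated])
  next
    fix S assume "S \<in> (\<Union>p\<in>arcs V A. ?F p)"
    then obtain p where p0: "p \<in> arcs V A" "S \<in> ?F p" by (rule UN_E)
    obtain u w where pe: "p = (u,w)" by force
    from p0(2) obtain K where K: "K \<in> {K. K \<subseteq> xset V A u w \<and> card K = 3}" "S = insert u (insert w K)"
      unfolding pe by (auto elim: imageE)
    have p: "(u,w) \<in> arcs V A" "K \<subseteq> xset V A u w" "card K = 3"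
      "S = insert u (insert w K)" using p0 K pe by auto
    have uw: "u \<in> V" "w \<in> V" "A u w" using p unfolding arcs_def out_set_def by auto
    have neq: "u \<noteq> w" using uw tour_irr[OF T] by auto
    have nin: "u \<notin> K" "w \<notin> K" using p(2) tour_irr[OF T] unfolding xset_def by auto
    have finK: "finite K" using p(3) by (metis card.infinite zero_neq_numeral)
    have "S \<subseteq> V" using p uw unfolding xset_def by auto
    moreover have "card S = 5" using p(3,4) nin neq finK by simp
    moreover have "has_src S A" unfolding has_src_def
      using p uw unfolding xset_def by (intro bexI[of _ u]) auto
    moreover have "has_snk S A" unfolding has_snk_def
      using p uw unfolding xset_def by (intro bexI[of _ w]) auto
    ultimately show "S \<in> {S. S \<subseteq> V \<and> card S = 5 \<and> has_src S A \<and> has_snk S A}" by blast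
  qed
  have "card (\<Union>p\<in>arcs V A. ?F p) = (\<Sum>p\<in>arcs V A. card (?F p))"
  proof (rule card_UN_disjoint[OF finarcs])
    show "\<forall>p\<in>arcs V A. finite (?F p)"
    proof
      fix p assume "p \<in> arcs V A"
      have "finite (xset V A (fst p) (snd p))" using fin unfolding xset_def by auto
      then show "finite (?F p)" by auto
    qed
    show "\<forall>i\<in>arcs V A. \<forall>j\<in>arcs V A. i \<noteq> j \<longrightarrow> ?F i \<inter> ?F j = {}"
    proof (intro ballI impI)
      fix i j assume ij: "i \<in> arcs V A" "j \<in> arcs V A" "i \<noteq> j"
      obtain u w where i: "i = (u,w)" by force
      obtain u' w' where j: "j = (u',w')" by force
      show "?F i \<inter> ?F j = {}"
      proof (rule ccontr)
        assume "?F i \<inter> ?F j \<noteq> {}"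
        then obtain S0 where S0: "S0 \<in> ?F i \<inter> ?F j" by (meson ex_in_conv)
        then have S0': "S0 \<in> ?F (u,w)" "S0 \<in> ?F (u',w')" using i j by simp_all
        from S0'(1) obtain K where K1: "K \<in> {K. K \<subseteq> xset V A u w \<and> card K = 3}" "S0 = insert u (insert w K)"
          by (auto elim: imageE)
        from S0'(2) obtain K' where K2: "K' \<in> {K. K \<subseteq> xset V A u' w' \<and> card K = 3}" "S0 = insert u' (insert w' K')"
          by (auto elim: imageE)
        have K: "K \<subseteq> xset V A u w" "K' \<subseteq> xset V A u' w'"
           "insert u (insert w K) = insert u' (insert w' K')" using K1 K2 by auto
        define S where "S = insert u (insert w K)"
        have a1: "u \<in> V" "w \<in> V" "A u w" "u' \<in> V" "w' \<in> V" "A u' w'"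
          using ij i j unfolding arcs_def out_set_def by auto
        have SV: "S \<subseteq> V" using K a1 unfolding S_def xset_def by auto
        have "u \<in> S" "u' \<in> S" "w \<in> S" "w' \<in> S" using K unfolding S_def by auto
        moreover have "\<forall>t\<in>S. t \<noteq> u \<longrightarrow> A u t" using K a1 unfolding S_def xset_def by auto
        moreover have "\<forall>t\<in>S. t \<noteq> u' \<longrightarrow> A u' t" using K a1 unfolding S_def xset_def
          by (metis (no_types, lifting) K(3) insert_iff mem_Collect_eq subset_iff)
        moreover have "\<forall>t\<in>S. t \<noteq> w \<longrightarrow> A t w" using K a1 unfolding S_def xset_def by auto
        moreover have "\<forall>t\<in>S. t \<noteq> w' \<longrightarrow> A t w'" using K a1 unfolding S_def xset_def
          by (metis (no_types, lifting) K(3) insert_iff mem_Collect_eq subset_iff)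
        ultimately have "u = u'" "w = w'"
          using src_unique[OF T SV, of u u'] snk_unique[OF T SV, of w w'] by auto
        then show False using ij i j by simp
      qed
    qed
  qed
  also have "\<dots> = (\<Sum>p\<in>arcs V A. card (xset V A (fst p) (snd p)) choose 3)"
  proof (rule sum.cong[OF refl])
    fix p assume p: "p \<in> arcs V A"
    obtain u w where pe: "p = (u,w)" by force
    have a1: "u \<in> V" "w \<in> V" using p pe unfolding arcs_def out_set_def by auto
    have nin: "u \<notin> xset V A u w" "w \<notin> xset V A u w" using tour_irr[OF T] a1 unfolding xset_def by auto
    have "inj_on (\<lambda>K. insert u (insert w K)) {K. K \<subseteq> xset V A u w \<and> card K = 3}"
    proof (rule inj_onI)
      fix K K' assume "K \<in> {K. K \<subseteq> xset V A u w \<and> card K = 3}" "K' \<in> {K. K \<subseteq> xset V A u w \<and> card K = 3}"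
        "insert u (insert w K) = insert u (insert w K')"
      then have h: "K \<subseteq> xset V A u w" "K' \<subseteq> xset V A u w" "insert u (insert w K) = insert u (insert w K')" by auto
      have "K = insert u (insert w K) - {u,w}" using h(1) nin by auto
      also have "\<dots> = insert u (insert w K') - {u,w}" using h(3) by simp
      also have "\<dots> = K'" using h(2) nin by auto
      finally show "K = K'" .
    qed
    then have "card (?F p) = card {K. K \<subseteq> xset V A u w \<and> card K = 3}" using pe by (simp add: card_image)
    also have "\<dots> = card (xset V A u w) choose 3"
      by (rule n_subsets) (use fin in \<open>simp add: xset_def\<close>)
    finally show "card (?F p) = card (xset V A (fst p) (snd p)) choose 3" using pe by simp
  qed
  finally show ?thesis using eq by simp
qed

lemma s5_identity:
  assumes T: "tournament V A"
  shows "s5 V A + (\<Sum>v\<in>V. outdeg V A v choose 4) + (\<Sum>v\<in>V. indeg V A v choose 4)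
        = (card V choose 5) + (\<Sum>p\<in>arcs V A. card (xset V A (fst p) (snd p)) choose 3)"
proof -
  have fin: "finite V" using tour_fin[OF T] .
  let ?P = "{S. S \<subseteq> V \<and> card S = 5}"
  let ?Src = "{S. S \<subseteq> V \<and> card S = 5 \<and> has_src S A}"
  let ?Snk = "{S. S \<subseteq> V \<and> card S = 5 \<and> has_snk S A}"
  let ?St = "{S. S \<subseteq> V \<and> card S = 5 \<and> strong_on S A}"
  have finP: "finite ?P" using fin by (simp add: finite_Collect_subsets)
  have St: "?St = ?P - (?Src \<union> ?Snk)" using strong5[OF T] by blast
  have sub: "?Src \<union> ?Snk \<subseteq> ?P" by blast
  have c1: "card ?St + card (?Src \<union> ?Snk) = card ?P"
    unfolding St using card_Diff_subset[OF finite_subset[OF sub finP] sub] card_mono[OF finP sub] by simp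
  have c2: "card (?Src \<union> ?Snk) + card (?Src \<inter> ?Snk) = card ?Src + card ?Snk"
  proof -
    have "finite ?Src" by (rule finite_subset[OF _ finP]) blast
    moreover have "finite ?Snk" by (rule finite_subset[OF _ finP]) blast
    ultimately have "finite ?Src" "finite ?Snk" by auto
    from card_Un_Int[OF this] show ?thesis by simp
  qed
  have i: "?Src \<inter> ?Snk = {S. S \<subseteq> V \<and> card S = 5 \<and> has_src S A \<and> has_snk S A}" by blast
  have "card ?P = card V choose 5" using n_subsets[OF fin] by simp
  then show ?thesis using c1 c2 count_src[OF T] count_snk[OF T] count_both[OF T] unfolding i s5_def
    by linarith
qed

lemma pairs_count:
  assumes T: "tournament V A" and W: "W \<subseteq> V"
  shows "2 * card {(v,w). v \<in> W \<and> w \<in> W \<and> A v w} = card W * (card W - 1)"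
proof -
  have finW: "finite W" using tour_fin[OF T] W finite_subset by blast
  let ?P = "{(v,w). v \<in> W \<and> w \<in> W \<and> A v w}"
  let ?Q = "{(v,w). v \<in> W \<and> w \<in> W \<and> A w v}"
  let ?D = "(\<lambda>x. (x,x)) ` W"
  have un: "?P \<union> ?Q = W \<times> W - ?D"
  proof (rule set_eqI)
    fix z :: "'a \<times> 'a"
    obtain v w where z: "z = (v,w)" by force
    show "z \<in> ?P \<union> ?Q \<longleftrightarrow> z \<in> W \<times> W - ?D"
    proof (cases "v = w")
      case True
      then show ?thesis using z tour_irr[OF T] W by auto
    next
      case False
      then show ?thesis using z tourD[OF T, of v w] W by auto
    qed
  qed
  have int: "?P \<inter> ?Q = {}"
  proof (rule equals0I)
    fix z assume "z \<in> ?P \<inter> ?Q"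
    then obtain v w where "z = (v,w)" "v \<in> W" "w \<in> W" "A v w" "A w v" by auto
    then show False using tourD[OF T, of v w] tour_irr[OF T, of v] W by (cases "v = w") auto
  qed
  have finP: "finite ?P" by (rule finite_subset[of _ "W \<times> W"]) (auto simp: finW)
  have finQ: "finite ?Q" by (rule finite_subset[of _ "W \<times> W"]) (auto simp: finW)
  have "?Q = (\<lambda>(v,w). (w,v)) ` ?P" by auto
  moreover have "inj_on (\<lambda>(v,w). (w,v)) ?P" by (auto simp: inj_on_def)
  ultimately have cQ: "card ?Q = card ?P" by (simp add: card_image)
  have cD: "card ?D = card W" by (rule card_image) (auto simp: inj_on_def)
  have "card (W \<times> W - ?D) = card W * card W - card W"
    using card_Diff_subset[of ?D "W \<times> W"] finW cD by (auto simp: card_cartesian_product)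
  moreover have "card (?P \<union> ?Q) = card ?P + card ?Q" using card_Un_disjoint[OF finP finQ int] .
  ultimately have "card ?P + card ?Q = card W * card W - card W" using un by simp
  then show ?thesis using cQ by (simp add: diff_mult_distrib2)
qed

lemma sum_indeg_within:
  assumes fin: "finite W"
  shows "(\<Sum>w\<in>W. card {v\<in>W. A v w}) = card {(v,w). v \<in> W \<and> w \<in> W \<and> A v w}"
proof -
  have "{(v,w). v \<in> W \<and> w \<in> W \<and> A v w} = (\<lambda>(w,v). (v,w)) ` (SIGMA w:W. {v\<in>W. A v w})" by auto
  moreover have "inj_on (\<lambda>(w,v). (v,w)) (SIGMA w:W. {v\<in>W. A v w})" by (auto simp: inj_on_def)
  ultimately have "card {(v,w). v \<in> W \<and> w \<in> W \<and> A v w} = card (SIGMA w:W. {v\<in>W. A v w})"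
    by (simp add: card_image)
  also have "\<dots> = (\<Sum>w\<in>W. card {v\<in>W. A v w})" using fin by simp
  finally show ?thesis by simp
qed

lemma indeg_eq:
  assumes T: "tournament V A" and v: "v \<in> V"
  shows "indeg V A v + outdeg V A v + 1 = card V"
proof -
  have fin: "finite V" using tour_fin[OF T] .
  have "{w\<in>V. A w v} \<union> out_set V A v = V - {v}"
    using tourD[OF T _ v] tour_irr[OF T v] v unfolding out_set_def by auto
  moreover have "{w\<in>V. A w v} \<inter> out_set V A v = {}"
    using tourD[OF T _ v] tour_irr[OF T v] v unfolding out_set_def by auto
  ultimately have "card {w\<in>V. A w v} + card (out_set V A v) = card (V - {v})"
    using card_Un_disjoint[of "{w\<in>V. A w v}" "out_set V A v"] fin unfolding out_set_def by auto
  moreover have "card (V - {v}) = card V - 1" using v fin by (simp add: card_Diff_singleton)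
  moreover have "card V \<ge> 1" using v fin by (metis card_0_eq empty_iff less_one not_le)
  ultimately show ?thesis unfolding indeg_def outdeg_def by linarith
qed

lemma xset_out:
  assumes T: "tournament V A" and uw: "(u,w) \<in> arcs V A"
  shows "card (xset V A u w) + outdeg (out_set V A u) A w + 1 = outdeg V A u"
proof -
  have fin: "finite V" using tour_fin[OF T] .
  have a: "u \<in> V" "w \<in> V" "A u w" using uw unfolding arcs_def out_set_def by auto
  let ?O = "out_set V A u"
  have "xset V A u w \<union> out_set ?O A w = ?O - {w}"
    using tourD[OF T _ a(2)] tour_irr[OF T a(2)] unfolding out_set_def xset_def by auto
  moreover have "xset V A u w \<inter> out_set ?O A w = {}"
    using tourD[OF T _ a(2)] tour_irr[OF T a(2)] unfolding out_set_def xset_def by auto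
  moreover have "finite ?O" using fin unfolding out_set_def by auto
  moreover have "finite (xset V A u w)" "finite (out_set ?O A w)"
    using fin unfolding xset_def out_set_def by auto
  ultimately have "card (xset V A u w) + card (out_set ?O A w) = card (?O - {w})"
    using card_Un_disjoint[of "xset V A u w" "out_set ?O A w"] by simp
  moreover have "w \<in> ?O" using a unfolding out_set_def by auto
  moreover have "card (?O - {w}) = card ?O - 1" using \<open>w \<in> ?O\<close> \<open>finite ?O\<close> by (simp add: card_Diff_singleton)
  moreover have "card ?O \<ge> 1" using \<open>w \<in> ?O\<close> \<open>finite ?O\<close> by (metis card_0_eq empty_iff less_one not_le)
  ultimately show ?thesis unfolding outdeg_def by linarith
qed

lemma sum_xset:
  assumes T: "tournament V A"
  shows "(\<Sum>p\<in>arcs V A. card (xset V A (fst p) (snd p))) = (\<Sum>u\<in>V. outdeg V A u choose 2)"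
proof -
  have fin: "finite V" using tour_fin[OF T] .
  have "(\<Sum>u\<in>V. \<Sum>w\<in>out_set V A u. card (xset V A u w)) = (\<Sum>(u,w)\<in>arcs V A. card (xset V A u w))"
    unfolding arcs_def by (rule sum.Sigma) (use fin in \<open>auto simp: out_set_def\<close>)
  then have "(\<Sum>p\<in>arcs V A. card (xset V A (fst p) (snd p))) = (\<Sum>u\<in>V. \<Sum>w\<in>out_set V A u. card (xset V A u w))"
    by (simp add: case_prod_beta')
  also have "\<dots> = (\<Sum>u\<in>V. outdeg V A u choose 2)"
  proof (rule sum.cong[OF refl])
    fix u assume u: "u \<in> V"
    let ?O = "out_set V A u"
    have finO: "finite ?O" using fin unfolding out_set_def by auto
    have "(\<Sum>w\<in>?O. card (xset V A u w)) = (\<Sum>w\<in>?O. card {v\<in>?O. A v w})"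
      by (rule sum.cong[OF refl]) (auto simp: xset_def out_set_def intro!: arg_cong[where f=card])
    also have "\<dots> = card {(v,w). v \<in> ?O \<and> w \<in> ?O \<and> A v w}" by (rule sum_indeg_within[OF finO])
    also have "\<dots> = card ?O choose 2"
      using pairs_count[OF T, of ?O] by (auto simp: out_set_def choose_two)
    finally show "(\<Sum>w\<in>?O. card (xset V A u w)) = outdeg V A u choose 2" unfolding outdeg_def .
  qed
  finally show ?thesis .
qed

lemma card_arcs:
  assumes T: "tournament V A"
  shows "card (arcs V A) = (\<Sum>u\<in>V. outdeg V A u)"
  using tour_fin[OF T] unfolding arcs_def outdeg_def by (subst card_SigmaI) (auto simp: out_set_def)

lemma ch2: "real (k choose 2) * 2 = real k * (real k - 1)"
proof (induction k)
  case 0 then show ?case by simp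
next
  case (Suc k)
  have "Suc k choose 2 = k + (k choose 2)" by (simp add: numeral_2_eq_2)
  then show ?case using Suc by (simp add: algebra_simps)
qed
lemma ch3: "real (k choose 3) * 6 = real k * (real k - 1) * (real k - 2)"
proof (induction k)
  case 0 then show ?case by simp
next
  case (Suc k)
  have "Suc k choose 3 = (k choose 2) + (k choose 3)" by (simp add: numeral_3_eq_3 numeral_2_eq_2)
  then show ?case using Suc ch2[of k] by (simp add: algebra_simps)
qed
lemma ch4: "real (k choose 4) * 24 = real k * (real k - 1) * (real k - 2) * (real k - 3)"
proof (induction k)
  case 0 then show ?case by simp
next
  case (Suc k)
  have "Suc k choose 4 = (k choose 3) + (k choose 4)" by (simp add: numeral_3_eq_3 eval_nat_numeral)
  then show ?case using Suc ch3[of k] by (simp add: algebra_simps)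
qed
lemma ch5: "real (k choose 5) * 120 = real k * (real k - 1) * (real k - 2) * (real k - 3) * (real k - 4)"
proof (induction k)
  case 0 then show ?case by simp
next
  case (Suc k)
  have "Suc k choose 5 = (k choose 4) + (k choose 5)" by (simp add: eval_nat_numeral)
  then show ?case using Suc ch4[of k] by (simp add: algebra_simps)
qed

lemma G_prop:
  fixes x m :: nat
  assumes "x \<le> 2 * m"
  defines "G \<equiv> (real x - real m) * ((real x - real m) * (real x + 2 * real m - 3) - 1)"
  shows "G \<ge> 0 \<and> (m \<noteq> 1 \<longrightarrow> (G = 0 \<longleftrightarrow> x = m)) \<and> (m = 1 \<longrightarrow> G = 0)"
proof -
  have c: "x = m \<or> x > m \<or> x < m" by auto
  consider "m = 0" | "m = 1" | "m \<ge> 2" by linarith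
  then show ?thesis
  proof cases
    case 1 then have "x = 0" using assms by simp
    then show ?thesis using 1 unfolding G_def by simp
  next
    case 2 then have "x = 0 \<or> x = 1 \<or> x = 2" using assms by auto
    then show ?thesis using 2 unfolding G_def by auto
  next
    case 3
    define t where "t = real x - real m"
    have G: "G = t * (t * (t + 3 * real m - 3) - 1)" unfolding G_def t_def by (simp add: algebra_simps)
    have m2: "real m \<ge> 2" using 3 by simp
    have pos: "G > 0" if "x \<noteq> m"
    proof (cases "x > m")
      case True
      then have t1: "t \<ge> 1" unfolding t_def by simp
      have "t + 3 * real m - 3 \<ge> 4" using t1 m2 by linarith
      then have "t * (t + 3 * real m - 3) \<ge> 1 * 4" using t1 by (intro mult_mono) auto
      then have "t * (t + 3 * real m - 3) - 1 > 0" by linarith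
      then show ?thesis unfolding G using t1 by simp
    next
      case False
      then have "x < m" using that by simp
      then have t1: "t \<le> -1" unfolding t_def by simp
      have "t + 3 * real m - 3 \<ge> 0"
      proof -
        have "t = real x - real m" by (simp add: t_def)
        then show ?thesis using m2 by simp
      qed
      then have "t * (t + 3 * real m - 3) \<le> 0" using t1 by (simp add: mult_nonpos_nonneg)
      then have "t * (t + 3 * real m - 3) - 1 < 0" by linarith
      then show ?thesis unfolding G using t1 by (simp add: mult_neg_neg)
    qed
    have "x = m \<Longrightarrow> G = 0" unfolding G_def by simp
    then show ?thesis using pos 3 by (cases "x = m") auto
  qed
qed

lemma H_prop:
  fixes x m :: nat
  assumes "x \<le> 2 * m + 1"
  defines "H \<equiv> (real x - real m) * (real x - real m - 1) * (real x + 2 * real m - 2)"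
  shows "H \<ge> 0 \<and> (m \<noteq> 1 \<longrightarrow> (H = 0 \<longleftrightarrow> x = m \<or> x = m + 1)) \<and> (m = 1 \<longrightarrow> (H = 0 \<longleftrightarrow> x \<le> 2))"
proof -
  consider "m = 0" | "m = 1" | "m \<ge> 2" by linarith
  then show ?thesis
  proof cases
    case 1 then have "x = 0 \<or> x = 1" using assms by auto
    then show ?thesis using 1 unfolding H_def by auto
  next
    case 2 then have "x = 0 \<or> x = 1 \<or> x = 2 \<or> x = 3" using assms by auto
    then show ?thesis using 2 unfolding H_def by auto
  next
    case 3
    define t where "t = real x - real m"
    have H: "H = t * (t - 1) * (t + 3 * real m - 2)" unfolding H_def t_def by (simp add: algebra_simps)
    have m2: "real m \<ge> 2" using 3 by simp
    have tt: "t * (t - 1) \<ge> 0"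
    proof (cases "x \<ge> m + 1")
      case True then have "t \<ge> 1" unfolding t_def by simp
      then show ?thesis by simp
    next
      case False then have "t \<le> 0" unfolding t_def by simp
      then show ?thesis by (simp add: mult_nonpos_nonpos)
    qed
    have l: "t + 3 * real m - 2 > 0" unfolding t_def using m2 by simp
    have pos: "H > 0" if "x \<noteq> m" "x \<noteq> m + 1"
    proof -
      have t0: "t \<noteq> 0" "t - 1 \<noteq> 0" using that unfolding t_def by auto
      have "t * (t - 1) \<noteq> 0" using t0 by simp
      then have "t * (t - 1) > 0" using tt by linarith
      then show ?thesis unfolding H using l by simp
    qed
    have "x = m \<or> x = m + 1 \<Longrightarrow> H = 0" unfolding H_def by auto
    moreover have "H \<ge> 0" unfolding H using tt l by simp
    ultimately show ?thesis using pos 3 by force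
  qed
qed

lemma alg3:
  fixes s c5 c4 F SX3 SX N SG m n d :: real
  assumes "s = c5 - 2*n*c4 + F" "c5*120 = n*(n-1)*(n-2)*(n-3)*(n-4)" "c4*24 = d*(d-1)*(d-2)*(d-3)"
    "F*6 = SX3" "SG = SX3 - N*(m*(m-1)*(m-2)) - 3*(m-1)^2*(SX - N*m)" "SX*2 = n * (d*(d-1))"
    "N = n*d" "n = 4*m+3" "d = 2*m+1"
  shows "s = n*(n+1)*(n-1)*(n-3)*(17*n-59)/3840 + SG/6"
proof -
  have c5: "c5 = n*(n-1)*(n-2)*(n-3)*(n-4)/120" using assms(2) by simp
  have c4: "c4 = d*(d-1)*(d-2)*(d-3)/24" using assms(3) by simp
  have F: "F = SX3/6" using assms(4) by simp
  have SX: "SX = n * (d*(d-1))/2" using assms(6) by simp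
  show ?thesis unfolding assms(1) c5 c4 F assms(5) SX assms(7) assms(8) assms(9)
    by (simp add: field_simps)
qed

lemma alg1:
  fixes s c5 c4 F SX3 SX N SH m n d :: real
  assumes "s = c5 - 2*n*c4 + F" "c5*120 = n*(n-1)*(n-2)*(n-3)*(n-4)" "c4*24 = d*(d-1)*(d-2)*(d-3)"
    "F*6 = SX3" "SH = SX3 - N*(m*(m-1)*(m-2)) - 3*m*(m-1)*(SX - N*m)" "SX*2 = n * (d*(d-1))"
    "N = n*d" "n = 4*m+5" "d = 2*m+2"
  shows "s = n*(n-1)*(17*n^3-93*n^2+127*n-243)/3840 + SH/6"
proof -
  have c5: "c5 = n*(n-1)*(n-2)*(n-3)*(n-4)/120" using assms(2) by simp
  have c4: "c4 = d*(d-1)*(d-2)*(d-3)/24" using assms(3) by simp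
  have F: "F = SX3/6" using assms(4) by simp
  have SX: "SX = n * (d*(d-1))/2" using assms(6) by simp
  show ?thesis unfolding assms(1) c5 c4 F assms(5) SX assms(7) assms(8) assms(9)
    by (simp add: field_simps) (simp add: algebra_simps power2_eq_square power3_eq_cube)
qed

abbreviation xs :: "'a set \<Rightarrow> ('a \<Rightarrow> 'a \<Rightarrow> bool) \<Rightarrow> 'a \<times> 'a \<Rightarrow> nat" where
  "xs V A p \<equiv> card (xset V A (fst p) (snd p))"

lemma reg_facts:
  assumes R: "regular_tournament V A"
  defines "d \<equiv> (card V - 1) div 2"
  shows "tournament V A" "card V = 2 * d + 1" "\<forall>v\<in>V. outdeg V A v = d"
    "\<forall>v\<in>V. indeg V A v = d" "finite (arcs V A)"
    "s5 V A + 2 * card V * (d choose 4) = (card V choose 5) + (\<Sum>p\<in>arcs V A. xs V A p choose 3)"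
    "(\<Sum>p\<in>arcs V A. xs V A p) = card V * (d choose 2)"
    "card (arcs V A) = card V * d"
    "\<forall>p\<in>arcs V A. xs V A p + outdeg (out_set V A (fst p)) A (snd p) + 1 = d"
proof -
  show T: "tournament V A" using R unfolding regular_tournament_def by auto
  have od: "odd (card V)" using R unfolding regular_tournament_def regular_on_def by auto
  show n: "card V = 2 * d + 1" using od unfolding d_def by presburger
  show o: "\<forall>v\<in>V. outdeg V A v = d" using R unfolding regular_tournament_def regular_on_def d_def by auto
  show i: "\<forall>v\<in>V. indeg V A v = d" using indeg_eq[OF T] o n by fastforce
  have fin: "finite V" using tour_fin[OF T] .
  show "finite (arcs V A)" unfolding arcs_def out_set_def using fin by auto
  have "s5 V A + (\<Sum>v\<in>V. outdeg V A v choose 4) + (\<Sum>v\<in>V. indeg V A v choose 4)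
        = (card V choose 5) + (\<Sum>p\<in>arcs V A. xs V A p choose 3)" by (rule s5_identity[OF T])
  moreover have "(\<Sum>v\<in>V. outdeg V A v choose 4) = card V * (d choose 4)" using o by simp
  moreover have "(\<Sum>v\<in>V. indeg V A v choose 4) = card V * (d choose 4)" using i by simp
  ultimately show "s5 V A + 2 * card V * (d choose 4) = (card V choose 5) + (\<Sum>p\<in>arcs V A. xs V A p choose 3)"
    by simp
  show "(\<Sum>p\<in>arcs V A. xs V A p) = card V * (d choose 2)" using sum_xset[OF T] o by simp
  show "card (arcs V A) = card V * d" using card_arcs[OF T] o by simp
  show "\<forall>p\<in>arcs V A. xs V A p + outdeg (out_set V A (fst p)) A (snd p) + 1 = d"
  proof
    fix p assume p: "p \<in> arcs V A"
    obtain u w where pe: "p = (u,w)" by force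
    have "u \<in> V" using p pe unfolding arcs_def by auto
    then show "xs V A p + outdeg (out_set V A (fst p)) A (snd p) + 1 = d"
      using xset_out[OF T, of u w] p pe o by auto
  qed
qed

lemma sum_outdeg_within:
  assumes T: "tournament V A" and S: "S \<subseteq> V"
  shows "2 * (\<Sum>w\<in>S. outdeg S A w) = card S * (card S - 1)"
proof -
  have finS: "finite S" using tour_fin[OF T] S finite_subset by blast
  have "(\<Sum>w\<in>S. outdeg S A w) = (\<Sum>w\<in>S. card {v\<in>S. (\<lambda>x y. A y x) v w})"
    unfolding outdeg_def out_set_def by simp
  also have "\<dots> = card {(v,w). v \<in> S \<and> w \<in> S \<and> (\<lambda>x y. A y x) v w}"
    by (rule sum_indeg_within[OF finS])
  finally show ?thesis using pairs_count[OF tour_flip[OF T] S] by simp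
qed

lemma DR_iff:
  assumes R: "regular_tournament V A" and n: "card V = 4 * m + 3"
  shows "doubly_regular V A \<longleftrightarrow> (\<forall>p\<in>arcs V A. xs V A p = m)"
proof -
  define d where "d = (card V - 1) div 2"
  note F = reg_facts[OF R, folded d_def]
  have d: "d = 2 * m + 1" using F(2) n by simp
  have "(\<forall>v\<in>V. regular_on (out_set V A v) A) \<longleftrightarrow> (\<forall>p\<in>arcs V A. xs V A p = m)"
  proof
    assume a: "\<forall>v\<in>V. regular_on (out_set V A v) A"
    show "\<forall>p\<in>arcs V A. xs V A p = m"
    proof
      fix p assume p: "p \<in> arcs V A"
      obtain u w where pe: "p = (u,w)" by force
      have uw: "u \<in> V" "w \<in> out_set V A u" using p pe unfolding arcs_def by auto
      have c: "card (out_set V A u) = d" using F(3) uw unfolding outdeg_def by auto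
      have "outdeg (out_set V A u) A w = m" using a uw c d unfolding regular_on_def by auto
      then show "xs V A p = m" using F(9) p pe d by fastforce
    qed
  next
    assume a: "\<forall>p\<in>arcs V A. xs V A p = m"
    show "\<forall>v\<in>V. regular_on (out_set V A v) A"
    proof
      fix u assume u: "u \<in> V"
      have c: "card (out_set V A u) = d" using F(3) u unfolding outdeg_def by auto
      have "outdeg (out_set V A u) A w = m" if w: "w \<in> out_set V A u" for w
      proof -
        have p: "(u,w) \<in> arcs V A" using u w unfolding arcs_def by auto
        then show ?thesis using a F(9) d by fastforce
      qed
      then show "regular_on (out_set V A u) A" unfolding regular_on_def using c d by simp
    qed
  qed
  then show ?thesis unfolding doubly_regular_def using R n by simp
qed

lemma NDR_iff:
  assumes R: "regular_tournament V A" and n: "card V = 4 * m + 5"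
  shows "nearly_doubly_regular V A \<longleftrightarrow> (\<forall>p\<in>arcs V A. xs V A p = m \<or> xs V A p = m + 1)"
proof -
  define d where "d = (card V - 1) div 2"
  note F = reg_facts[OF R, folded d_def]
  have d: "d = 2 * m + 2" using F(2) n by simp
  have T: "tournament V A" by (rule F(1))
  have key: "near_regular_on (out_set V A u) A \<longleftrightarrow>
      (\<forall>w\<in>out_set V A u. outdeg (out_set V A u) A w = m + 1 \<or> outdeg (out_set V A u) A w = m)"
    if u: "u \<in> V" for u
  proof -
    let ?S = "out_set V A u"
    have SV: "?S \<subseteq> V" unfolding out_set_def by auto
    have finS: "finite ?S" using tour_fin[OF T] SV finite_subset by blast
    have c: "card ?S = 2 * m + 2" using F(3) u d unfolding outdeg_def by auto
    let ?P = "{x \<in> ?S. outdeg ?S A x = m + 1}"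
    let ?Q = "{x \<in> ?S. outdeg ?S A x + 1 = m + 1}"
    have dj: "?P \<inter> ?Q = {}" by auto
    have fP: "finite ?P" "finite ?Q" using finS by auto
    have nr: "near_regular_on ?S A \<longleftrightarrow> card ?P = m + 1 \<and> card ?Q = m + 1"
      unfolding near_regular_on_def c by simp
    show ?thesis
    proof
      assume "near_regular_on ?S A"
      then have cc: "card ?P = m + 1" "card ?Q = m + 1" using nr by auto
      have "card (?P \<union> ?Q) = card ?S" using card_Un_disjoint[OF fP dj] cc c by simp
      then have "?P \<union> ?Q = ?S" using finS by (intro card_subset_eq) auto
      then show "\<forall>w\<in>?S. outdeg ?S A w = m + 1 \<or> outdeg ?S A w = m" by auto
    next
      assume a: "\<forall>w\<in>?S. outdeg ?S A w = m + 1 \<or> outdeg ?S A w = m"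
      then have un: "?P \<union> ?Q = ?S" by auto
      have s1: "card ?P + card ?Q = 2 * m + 2" using card_Un_disjoint[OF fP dj] un c by simp
      have "(\<Sum>w\<in>?S. outdeg ?S A w) = (\<Sum>w\<in>?P \<union> ?Q. outdeg ?S A w)"
        using un by simp
      also have "\<dots> = (\<Sum>w\<in>?P. outdeg ?S A w) + (\<Sum>w\<in>?Q. outdeg ?S A w)"
        by (rule sum.union_disjoint[OF fP dj])
      also have "\<dots> = card ?P * (m + 1) + card ?Q * m" by simp
      finally have s2: "(\<Sum>w\<in>?S. outdeg ?S A w) = card ?P * (m + 1) + card ?Q * m" .
      have s3: "2 * (\<Sum>w\<in>?S. outdeg ?S A w) = (2 * m + 2) * (2 * m + 1)"
        using sum_outdeg_within[OF T SV] c by simp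
      have "card ?P * m + card ?Q * m = (2 * m + 2) * m" using s1 by (metis add_mult_distrib)
      then have "card ?P = m + 1" using s2 s3 by (simp add: algebra_simps)
      moreover then have "card ?Q = m + 1" using s1 by simp
      ultimately show "near_regular_on ?S A" using nr by simp
    qed
  qed
  have "(\<forall>v\<in>V. near_regular_on (out_set V A v) A) \<longleftrightarrow> (\<forall>p\<in>arcs V A. xs V A p = m \<or> xs V A p = m + 1)"
  proof
    assume a: "\<forall>v\<in>V. near_regular_on (out_set V A v) A"
    show "\<forall>p\<in>arcs V A. xs V A p = m \<or> xs V A p = m + 1"
    proof
      fix p assume p: "p \<in> arcs V A"
      obtain u w where pe: "p = (u,w)" by force
      have uw: "u \<in> V" "w \<in> out_set V A u" using p pe unfolding arcs_def by auto
      have "outdeg (out_set V A u) A w = m + 1 \<or> outdeg (out_set V A u) A w = m"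
        using a key uw by blast
      then show "xs V A p = m \<or> xs V A p = m + 1" using F(9) p pe d by fastforce
    qed
  next
    assume a: "\<forall>p\<in>arcs V A. xs V A p = m \<or> xs V A p = m + 1"
    show "\<forall>v\<in>V. near_regular_on (out_set V A v) A"
    proof
      fix u assume u: "u \<in> V"
      have "outdeg (out_set V A u) A w = m + 1 \<or> outdeg (out_set V A u) A w = m"
        if w: "w \<in> out_set V A u" for w
      proof -
        have p: "(u,w) \<in> arcs V A" using u w unfolding arcs_def by auto
        then show ?thesis using a F(9) d by fastforce
      qed
      then show "near_regular_on (out_set V A u) A" using key[OF u] by blast
    qed
  qed
  then show ?thesis unfolding nearly_doubly_regular_def using R n by simp
qed

lemma sum_poly0:
  fixes f a :: "'b \<Rightarrow> real"
  assumes "finite P"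
  shows "(\<Sum>p\<in>P. a p - c - k * (f p - m)) =
    (\<Sum>p\<in>P. a p) - real (card P) * c - k * ((\<Sum>p\<in>P. f p) - real (card P) * m)"
proof -
  have "(\<Sum>p\<in>P. a p - c - k * (f p - m)) = (\<Sum>p\<in>P. a p) - (\<Sum>p\<in>P. c) - (\<Sum>p\<in>P. k * (f p - m))"
    by (simp add: sum_subtractf)
  also have "(\<Sum>p\<in>P. k * (f p - m)) = k * (\<Sum>p\<in>P. f p - m)" by (simp add: sum_distrib_left)
  also have "(\<Sum>p\<in>P. f p - m) = (\<Sum>p\<in>P. f p) - real (card P) * m" by (simp add: sum_subtractf)
  finally show ?thesis by simp
qed

lemma sum_poly:
  fixes f :: "'b \<Rightarrow> real"
  assumes "finite P"
  shows "(\<Sum>p\<in>P. f p * (f p - 1) * (f p - 2) - c - k * (f p - m)) =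
    (\<Sum>p\<in>P. f p * (f p - 1) * (f p - 2)) - real (card P) * c - k * ((\<Sum>p\<in>P. f p) - real (card P) * m)"
  by (rule sum_poly0[OF assms])

lemma real_facts:
  assumes R: "regular_tournament V A"
  defines "d \<equiv> (card V - 1) div 2"
  shows "real (s5 V A) = real (card V choose 5) - 2 * real (card V) * real (d choose 4)
           + (\<Sum>p\<in>arcs V A. real (xs V A p choose 3))"
    "(\<Sum>p\<in>arcs V A. real (xs V A p choose 3)) * 6 = (\<Sum>p\<in>arcs V A. real (xs V A p) * (real (xs V A p) - 1) * (real (xs V A p) - 2))"
    "(\<Sum>p\<in>arcs V A. real (xs V A p)) * 2 = real (card V) * (real d * (real d - 1))"
    "real (card (arcs V A)) = real (card V) * real d"
    "real (d choose 4) * 24 = real d * (real d - 1) * (real d - 2) * (real d - 3)"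
    "real (card V choose 5) * 120 = real (card V) * (real (card V) - 1) * (real (card V) - 2) * (real (card V) - 3) * (real (card V) - 4)"
proof -
  note F = reg_facts[OF R, folded d_def]
  have "real (s5 V A + 2 * card V * (d choose 4)) = real ((card V choose 5) + (\<Sum>p\<in>arcs V A. xs V A p choose 3))"
    using F(6) by simp
  then show "real (s5 V A) = real (card V choose 5) - 2 * real (card V) * real (d choose 4)
           + (\<Sum>p\<in>arcs V A. real (xs V A p choose 3))" by simp
  show "(\<Sum>p\<in>arcs V A. real (xs V A p choose 3)) * 6 = (\<Sum>p\<in>arcs V A. real (xs V A p) * (real (xs V A p) - 1) * (real (xs V A p) - 2))"
    by (simp add: sum_distrib_right ch3)
  have "real (\<Sum>p\<in>arcs V A. xs V A p) * 2 = real (card V * (d choose 2)) * 2" using F(7) by simp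
  then show "(\<Sum>p\<in>arcs V A. real (xs V A p)) * 2 = real (card V) * (real d * (real d - 1))"
    using ch2[of d] by simp
  show "real (card (arcs V A)) = real (card V) * real d" using F(8) by simp
  show "real (d choose 4) * 24 = real d * (real d - 1) * (real d - 2) * (real d - 3)" by (rule ch4)
  show "real (card V choose 5) * 120 = real (card V) * (real (card V) - 1) * (real (card V) - 2) * (real (card V) - 3) * (real (card V) - 4)"
    by (rule ch5)
qed

lemma case3:
  assumes R: "regular_tournament V A" and n: "card V = 4 * m + 3"
  shows "(let n = real (card V);
                 b = n * (n + 1) * (n - 1) * (n - 3) * (17 * n - 59) / 3840
             in b \<le> real (s5 V A) \<and>
                (real (s5 V A) = b \<longleftrightarrow> doubly_regular V A \<or> card V = 7))"
proof -
  define d where "d = (card V - 1) div 2"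
  note F = reg_facts[OF R, folded d_def]
  note RF = real_facts[OF R, folded d_def]
  have d: "d = 2 * m + 1" using F(2) n by simp
  define G where "G = (\<lambda>x::nat. (real x - real m) * ((real x - real m) * (real x + 2 * real m - 3) - 1))"
  define SG where "SG = (\<Sum>p\<in>arcs V A. G (xs V A p))"
  have xle: "xs V A p \<le> 2 * m" if "p \<in> arcs V A" for p using F(9) that d by fastforce
  have Gp: "G x = real x * (real x - 1) * (real x - 2) - real m * (real m - 1) * (real m - 2) - 3 * (real m - 1)^2 * (real x - real m)" for x
    unfolding G_def by (simp add: algebra_simps power2_eq_square)
  have SGe: "SG = (\<Sum>p\<in>arcs V A. real (xs V A p) * (real (xs V A p) - 1) * (real (xs V A p) - 2))
      - real (card (arcs V A)) * (real m * (real m - 1) * (real m - 2))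
      - 3 * (real m - 1)^2 * ((\<Sum>p\<in>arcs V A. real (xs V A p)) - real (card (arcs V A)) * real m)"
    unfolding SG_def Gp by (rule sum_poly[OF F(5)])
  have main: "real (s5 V A) = real (card V) * (real (card V) + 1) * (real (card V) - 1) * (real (card V) - 3) * (17 * real (card V) - 59) / 3840 + SG / 6"
    by (rule alg3[OF RF(1) RF(6) RF(5) RF(2) SGe RF(3) RF(4)]) (use n d in simp_all)
  have Gx: "G x \<ge> 0 \<and> (m \<noteq> 1 \<longrightarrow> (G x = 0 \<longleftrightarrow> x = m)) \<and> (m = 1 \<longrightarrow> G x = 0)"
    if "x \<le> 2 * m" for x using G_prop[OF that] unfolding G_def by simp
  have Gn: "\<forall>p\<in>arcs V A. G (xs V A p) \<ge> 0"
  proof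
    fix p assume "p \<in> arcs V A" then show "G (xs V A p) \<ge> 0" using Gx[OF xle] by simp
  qed
  have SG0: "SG \<ge> 0" unfolding SG_def using Gn by (simp add: sum_nonneg)
  have SGz: "SG = 0 \<longleftrightarrow> (\<forall>p\<in>arcs V A. G (xs V A p) = 0)"
    unfolding SG_def by (rule sum_nonneg_eq_0_iff[OF F(5)]) (use Gn in auto)
  define bb where "bb = real (card V) * (real (card V) + 1) * (real (card V) - 1) * (real (card V) - 3) * (17 * real (card V) - 59) / 3840"
  have main': "real (s5 V A) = bb + SG / 6" using main unfolding bb_def .
  have le: "bb \<le> real (s5 V A)" using main' SG0 by simp
  have eqv: "real (s5 V A) = bb \<longleftrightarrow> SG = 0" using main' by simp
  have "real (s5 V A) = bb \<longleftrightarrow> doubly_regular V A \<or> card V = 7"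
  proof (cases "m = 1")
    case True
    have "\<forall>p\<in>arcs V A. G (xs V A p) = 0"
    proof
      fix p assume "p \<in> arcs V A" then show "G (xs V A p) = 0" using Gx[OF xle] True by simp
    qed
    then show ?thesis using SGz eqv n True by simp
  next
    case False
    have "(\<forall>p\<in>arcs V A. G (xs V A p) = 0) \<longleftrightarrow> (\<forall>p\<in>arcs V A. xs V A p = m)"
    proof (intro ball_cong refl)
      fix p assume "p \<in> arcs V A" then show "G (xs V A p) = 0 \<longleftrightarrow> xs V A p = m" using Gx[OF xle] False by simp
    qed
    moreover have "card V \<noteq> 7" using n False by simp
    ultimately show ?thesis using SGz eqv DR_iff[OF R n] by simp
  qed
  then show ?thesis using le unfolding Let_def bb_def by simp
qed

lemma case1:
  assumes R: "regular_tournament V A" and n: "card V = 4 * m + 5"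
  defines "bb \<equiv> real (card V) * (real (card V) - 1) * (17 * real (card V) ^ 3 - 93 * real (card V) ^ 2 + 127 * real (card V) - 243) / 3840"
  shows "bb \<le> real (s5 V A)"
    "m \<noteq> 1 \<Longrightarrow> real (s5 V A) = bb \<longleftrightarrow> nearly_doubly_regular V A"
    "m = 1 \<Longrightarrow> real (s5 V A) = bb \<longleftrightarrow> (\<forall>p\<in>arcs V A. xs V A p \<le> 2)"
proof -
  define d where "d = (card V - 1) div 2"
  note F = reg_facts[OF R, folded d_def]
  note RF = real_facts[OF R, folded d_def]
  have d: "d = 2 * m + 2" using F(2) n by simp
  define G where "G = (\<lambda>x::nat. (real x - real m) * (real x - real m - 1) * (real x + 2 * real m - 2))"
  define SG where "SG = (\<Sum>p\<in>arcs V A. G (xs V A p))"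
  have xle: "xs V A p \<le> 2 * m + 1" if "p \<in> arcs V A" for p using F(9) that d by fastforce
  have Gp: "G x = real x * (real x - 1) * (real x - 2) - real m * (real m - 1) * (real m - 2) - 3 * real m * (real m - 1) * (real x - real m)" for x
    unfolding G_def by (simp add: algebra_simps power2_eq_square)
  have SGe: "SG = (\<Sum>p\<in>arcs V A. real (xs V A p) * (real (xs V A p) - 1) * (real (xs V A p) - 2))
      - real (card (arcs V A)) * (real m * (real m - 1) * (real m - 2))
      - 3 * real m * (real m - 1) * ((\<Sum>p\<in>arcs V A. real (xs V A p)) - real (card (arcs V A)) * real m)"
    unfolding SG_def Gp by (rule sum_poly[OF F(5)])
  have main: "real (s5 V A) = bb + SG / 6" unfolding bb_def
    by (rule alg1[OF RF(1) RF(6) RF(5) RF(2) SGe RF(3) RF(4)]) (use n d in simp_all)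
  have Gx: "G x \<ge> 0 \<and> (m \<noteq> 1 \<longrightarrow> (G x = 0 \<longleftrightarrow> x = m \<or> x = m + 1)) \<and> (m = 1 \<longrightarrow> (G x = 0 \<longleftrightarrow> x \<le> 2))"
    if "x \<le> 2 * m + 1" for x using H_prop[OF that] unfolding G_def by simp
  have Gn: "\<forall>p\<in>arcs V A. G (xs V A p) \<ge> 0"
  proof
    fix p assume "p \<in> arcs V A" then show "G (xs V A p) \<ge> 0" using Gx[OF xle] by simp
  qed
  have SG0: "SG \<ge> 0" unfolding SG_def using Gn by (simp add: sum_nonneg)
  have SGz: "SG = 0 \<longleftrightarrow> (\<forall>p\<in>arcs V A. G (xs V A p) = 0)"
    unfolding SG_def by (rule sum_nonneg_eq_0_iff[OF F(5)]) (use Gn in auto)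
  show "bb \<le> real (s5 V A)" using main SG0 by simp
  have eqv: "real (s5 V A) = bb \<longleftrightarrow> SG = 0" using main by simp
  show "real (s5 V A) = bb \<longleftrightarrow> nearly_doubly_regular V A" if m1: "m \<noteq> 1"
  proof -
    have "(\<forall>p\<in>arcs V A. G (xs V A p) = 0) \<longleftrightarrow> (\<forall>p\<in>arcs V A. xs V A p = m \<or> xs V A p = m + 1)"
    proof (intro ball_cong refl)
      fix p assume "p \<in> arcs V A" then show "G (xs V A p) = 0 \<longleftrightarrow> xs V A p = m \<or> xs V A p = m + 1"
        using Gx[OF xle] m1 by simp
    qed
    then show ?thesis using SGz eqv NDR_iff[OF R n] by simp
  qed
  show "real (s5 V A) = bb \<longleftrightarrow> (\<forall>p\<in>arcs V A. xs V A p \<le> 2)" if m1: "m = 1"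
  proof -
    have "(\<forall>p\<in>arcs V A. G (xs V A p) = 0) \<longleftrightarrow> (\<forall>p\<in>arcs V A. xs V A p \<le> 2)"
    proof (intro ball_cong refl)
      fix p assume "p \<in> arcs V A" then show "G (xs V A p) = 0 \<longleftrightarrow> xs V A p \<le> 2"
        using Gx[OF xle] m1 by simp
    qed
    then show ?thesis using SGz eqv by simp
  qed
qed

definition Ccond :: "'a set \<Rightarrow> ('a \<Rightarrow> 'a \<Rightarrow> bool) \<Rightarrow> bool" where
  "Ccond V A \<longleftrightarrow> (\<forall>u\<in>V. \<forall>w\<in>V. A u w \<longrightarrow> (\<exists>v\<in>V. A u v \<and> A w v))"

lemma DDV_eq: "DD_V = {(0,0),(0,1),(0,2),(1,0),(1,1),(1,2),(2,0),(2,1),(2,2)}"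
  unfolding DD_V_def by (auto simp: le_Suc_eq numeral_2_eq_2)

lemma nine_eq: "{0..<9::nat} = {0,1,2,3,4,5,6,7,8}"
  by (auto simp: eval_nat_numeral less_Suc_eq)

lemma C_DD: "Ccond DD_V DD_A"
  unfolding Ccond_def DDV_eq by (simp add: DD_A_def cyc3_def)

lemma C_M1: "Ccond {0..<9} (mat_rel M1)"
  unfolding Ccond_def nine_eq by (simp add: mat_rel_def M1_def)

lemma C_M2: "Ccond {0..<9} (mat_rel M2)"
  unfolding Ccond_def nine_eq by (simp add: mat_rel_def M2_def)

lemma C_iso:
  assumes I: "tourn_iso V A W B" and C: "Ccond W B"
  shows "Ccond V A"
proof -
  obtain f where f: "bij_betw f V W" "\<forall>x\<in>V. \<forall>y\<in>V. A x y \<longleftrightarrow> B (f x) (f y)"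
    using I unfolding tourn_iso_def by blast
  show ?thesis unfolding Ccond_def
  proof (intro ballI impI)
    fix u w assume uw: "u \<in> V" "w \<in> V" "A u w"
    have "f u \<in> W" "f w \<in> W" using f(1) uw by (auto simp: bij_betw_def)
    moreover have "B (f u) (f w)" using f(2) uw by blast
    ultimately obtain v' where v': "v' \<in> W" "B (f u) v'" "B (f w) v'" using C unfolding Ccond_def by blast
    obtain v where v: "v \<in> V" "f v = v'" using f(1) v'(1) by (metis bij_betw_def imageE)
    show "\<exists>v\<in>V. A u v \<and> A w v" using v v' f(2) uw by metis
  qed
qed

lemma C_iff:
  assumes R: "regular_tournament V A" and n: "card V = 9"
  shows "(\<forall>p\<in>arcs V A. xs V A p \<le> 2) \<longleftrightarrow> Ccond V A"
proof -
  define d where "d = (card V - 1) div 2"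
  note F = reg_facts[OF R, folded d_def]
  have d: "d = 4" using F(2) n by simp
  have fin: "finite V" using tour_fin[OF F(1)] .
  have key: "xs V A (u,w) \<le> 2 \<longleftrightarrow> (\<exists>v\<in>V. A u v \<and> A w v)" if uw: "u \<in> V" "w \<in> V" "A u w" for u w
  proof -
    have p: "(u,w) \<in> arcs V A" using uw unfolding arcs_def out_set_def by auto
    have e: "xs V A (u,w) + card (out_set (out_set V A u) A w) + 1 = 4"
      using F(9) p d unfolding outdeg_def by fastforce
    have fo: "finite (out_set (out_set V A u) A w)" using fin unfolding out_set_def by auto
    have "xs V A (u,w) \<le> 2 \<longleftrightarrow> out_set (out_set V A u) A w \<noteq> {}"
      using e fo card_0_eq[OF fo] by linarith
    also have "\<dots> \<longleftrightarrow> (\<exists>v\<in>V. A u v \<and> A w v)" unfolding out_set_def by auto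
    finally show ?thesis .
  qed
  show ?thesis
  proof
    assume a: "\<forall>p\<in>arcs V A. xs V A p \<le> 2"
    show "Ccond V A" unfolding Ccond_def
    proof (intro ballI impI)
      fix u w assume uw: "u \<in> V" "w \<in> V" "A u w"
      have "(u,w) \<in> arcs V A" using uw unfolding arcs_def out_set_def by auto
      then show "\<exists>v\<in>V. A u v \<and> A w v" using a key[OF uw] by auto
    qed
  next
    assume C: "Ccond V A"
    show "\<forall>p\<in>arcs V A. xs V A p \<le> 2"
    proof
      fix p assume p: "p \<in> arcs V A"
      obtain u w where pe: "p = (u,w)" by force
      have uw: "u \<in> V" "w \<in> V" "A u w" using p pe unfolding arcs_def out_set_def by auto
      then show "xs V A p \<le> 2" using key[OF uw] C pe unfolding Ccond_def by auto
    qed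
  qed
qed

lemma iso_lists:
  assumes dw: "distinct ws" and sw: "set ws = V" and dt: "distinct ts" and st0: "set ts \<subseteq> W"
    and fW: "finite W" and cW: "card W = length ts"
    and len: "length ws = length ts"
    and ar: "\<forall>x\<in>set (zip ws ts). \<forall>y\<in>set (zip ws ts). A (fst x) (fst y) = B (snd x) (snd y)"
  shows "tourn_iso V A W B"
proof -
  have st: "set ts = W" using card_subset_eq[OF fW st0] distinct_card[OF dt] cW by simp
  let ?I = "{..<length ws}"
  have b1: "bij_betw ((!) ws) ?I V" using bij_betw_nth[OF dw refl sw[symmetric]] .
  have b2: "bij_betw ((!) ts) ?I W" using bij_betw_nth[OF dt _ st[symmetric]] len by simp
  define g where "g = inv_into ?I ((!) ws)"
  have bg: "bij_betw g V ?I" unfolding g_def by (rule bij_betw_inv_into[OF b1])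
  define f where "f = (\<lambda>v. ts ! g v)"
  have bf: "bij_betw f V W" unfolding f_def using bij_betw_trans[OF bg b2] by (simp add: comp_def)
  have gi: "ws ! g v = v" if "v \<in> V" for v
    unfolding g_def using b1 that by (simp add: bij_betw_def f_inv_into_f)
  have gl: "g v < length ws" if "v \<in> V" for v using bg that by (auto simp: bij_betw_def)
  have z: "(v, f v) \<in> set (zip ws ts)" if "v \<in> V" for v
  proof -
    have "(ws ! g v, ts ! g v) \<in> set (zip ws ts)" using gl[OF that] len by (auto simp: set_zip)
    then show ?thesis using gi[OF that] unfolding f_def by simp
  qed
  have "\<forall>x\<in>V. \<forall>y\<in>V. A x y \<longleftrightarrow> B (f x) (f y)"
  proof (intro ballI)
    fix x y assume "x \<in> V" "y \<in> V"
    then show "A x y \<longleftrightarrow> B (f x) (f y)" using ar z[of x] z[of y] by fastforce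
  qed
  then show ?thesis unfolding tourn_iso_def using bf by blast
qed

lemma card_list_int:
  assumes "distinct ws"
  shows "int (card {y \<in> set ws. P y}) = sum_list (map (\<lambda>y. if P y then 1 else 0) ws)"
  using assms
proof (induction ws)
  case Nil then show ?case by simp
next
  case (Cons x ws)
  have "{y \<in> set (x # ws). P y} = (if P x then insert x {y \<in> set ws. P y} else {y \<in> set ws. P y})" by auto
  then show ?case using Cons by auto
qed

lemma smt9:
  fixes A :: "'a \<Rightarrow> 'a \<Rightarrow> bool"
  assumes rev: "A v1 v0 = (\<not> A v0 v1)" "A p v0 = (\<not> A v0 p)" "A q v0 = (\<not> A v0 q)" "A r v0 = (\<not> A v0 r)" "A a v0 = (\<not> A v0 a)" "A b v0 = (\<not> A v0 b)" "A c v0 = (\<not> A v0 c)" "A d v0 = (\<not> A v0 d)" "A p v1 = (\<not> A v1 p)" "A q v1 = (\<not> A v1 q)" "A r v1 = (\<not> A v1 r)" "A a v1 = (\<not> A v1 a)" "A b v1 = (\<not> A v1 b)" "A c v1 = (\<not> A v1 c)" "A d v1 = (\<not> A v1 d)" "A q p = (\<not> A p q)" "A r p = (\<not> A p r)" "A a p = (\<not> A p a)" "A b p = (\<not> A p b)" "A c p = (\<not> A p c)" "A d p = (\<not> A p d)" "A r q = (\<not> A q r)" "A a q = (\<not> A q a)" "A b q = (\<not> A q b)" "A c q = (\<not> A q c)" "A d q = (\<not> A q d)" "A a r = (\<not> A r a)" "A b r = (\<not> A r b)" "A c r = (\<not> A r c)" "A d r = (\<not> A r d)" "A b a = (\<not>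 A a b)" "A c a = (\<not> A a c)" "A d a = (\<not> A a d)" "A c b = (\<not> A b c)" "A d b = (\<not> A b d)" "A d c = (\<not> A c d)"
    and irr: "\<not> A v0 v0" "\<not> A v1 v1" "\<not> A p p" "\<not> A q q" "\<not> A r r" "\<not> A a a" "\<not> A b b" "\<not> A c c" "\<not> A d d"
    and kn: "A v0 v1" "A v0 p" "A v0 q" "A v0 r" "\<not> A v0 a" "\<not> A v0 b" "\<not> A v0 c" "\<not> A v0 d" "A v1 p" "A v1 q" "A v1 r" "A v1 a" "\<not> A v1 b" "\<not> A v1 c" "\<not> A v1 d" "A p q" "\<not> A p r" "A q r"
    and deg: "\<forall>x\<in>{v0,v1,p,q,r,a,b,c,d}. sum_list (map (\<lambda>y. if A x y then 1 else 0) [v0,v1,p,q,r,a,b,c,d]) = (4::int)"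
    and C: "Ccond {v0,v1,p,q,r,a,b,c,d} A"
  shows "(\<not> A p a \<and> A p b \<and> A p c \<and> A p d \<and> \<not> A q a \<and> A q b \<and> A q c \<and> A q d \<and> \<not> A r a \<and> A r b \<and> A r c \<and> A r d \<and> \<not> A a b \<and> \<not> A a c \<and> \<not> A a d \<and> \<not> A b c \<and> A b d \<and> \<not> A c d) \<or>
    (\<not> A p a \<and> A p b \<and> A p c \<and> A p d \<and> \<not> A q a \<and> A q b \<and> A q c \<and> A q d \<and> A r a \<and> \<not> A r b \<and> A r c \<and> A r d \<and> A a b \<and> \<not> A a c \<and> \<not> A a d \<and> \<not> A b c \<and> A b d \<and> \<not> A c d) \<or>
    (\<not> A p a \<and> A p b \<and> A p c \<and> A p d \<and> A q a \<and> \<not> A q b \<and> A q c \<and> A q d \<and> \<not> A r a \<and> A r b \<and> A r c \<and> A r d \<and> A a b \<and> \<not> A a c \<and> \<not> A a d \<and> \<not> A b c \<and> A b d \<and> \<not> A c d) \<or>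
    (A p a \<and> \<not> A p b \<and> A p c \<and> A p d \<and> \<not> A q a \<and> A q b \<and> A q c \<and> A q d \<and> \<not> A r a \<and> A r b \<and> A r c \<and> A r d \<and> A a b \<and> \<not> A a c \<and> \<not> A a d \<and> \<not> A b c \<and> A b d \<and> \<not> A c d) \<or>
    (\<not> A p a \<and> A p b \<and> A p c \<and> A p d \<and> \<not> A q a \<and> A q b \<and> A q c \<and> A q d \<and> A r a \<and> A r b \<and> \<not> A r c \<and> A r d \<and> \<not> A a b \<and> A a c \<and> \<not> A a d \<and> \<not> A b c \<and> A b d \<and> \<not> A c d) \<or>
    (\<not> A p a \<and> A p b \<and> A p c \<and> A p d \<and> A q a \<and> A q b \<and> \<not> A q c \<and> A q d \<and> \<not> A r a \<and> A r b \<and> A r c \<and> A r d \<and> \<not> A a b \<and> A a c \<and> \<not> A a d \<and> \<not> A b c \<and> A b d \<and> \<not> A c d) \<or>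
    (A p a \<and> A p b \<and> \<not> A p c \<and> A p d \<and> \<not> A q a \<and> A q b \<and> A q c \<and> A q d \<and> \<not> A r a \<and> A r b \<and> A r c \<and> A r d \<and> \<not> A a b \<and> A a c \<and> \<not> A a d \<and> \<not> A b c \<and> A b d \<and> \<not> A c d) \<or>
    (\<not> A p a \<and> A p b \<and> A p c \<and> A p d \<and> A q a \<and> \<not> A q b \<and> A q c \<and> A q d \<and> A r a \<and> A r b \<and> \<not> A r c \<and> A r d \<and> A a b \<and> A a c \<and> \<not> A a d \<and> \<not> A b c \<and> A b d \<and> \<not> A c d) \<or>
    (A p a \<and> A p b \<and> \<not> A p c \<and> A p d \<and> \<not> A q a \<and> A q b \<and> A q c \<and> A q d \<and> A r a \<and> \<not> A r b \<and> A r c \<and> A r d \<and> A a b \<and> A a c \<and> \<not> A a d \<and> \<not> A b c \<and> A b d \<and> \<not> A c d) \<or>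
    (A p a \<and> \<not> A p b \<and> A p c \<and> A p d \<and> A q a \<and> A q b \<and> \<not> A q c \<and> A q d \<and> \<not> A r a \<and> A r b \<and> A r c \<and> A r d \<and> A a b \<and> A a c \<and> \<not> A a d \<and> \<not> A b c \<and> A b d \<and> \<not> A c d) \<or>
    (\<not> A p a \<and> A p b \<and> A p c \<and> A p d \<and> \<not> A q a \<and> A q b \<and> A q c \<and> A q d \<and> A r a \<and> A r b \<and> A r c \<and> \<not> A r d \<and> \<not> A a b \<and> \<not> A a c \<and> A a d \<and> \<not> A b c \<and> A b d \<and> \<not> A c d) \<or>
    (\<not> A p a \<and> A p b \<and> A p c \<and> A p d \<and> A q a \<and> A q b \<and> A q c \<and> \<not> A q d \<and> \<not> A r a \<and> A r b \<and> A r c \<and> A r d \<and> \<not> A a b \<and> \<not> A a c \<and> A a d \<and> \<not> A b c \<and> A b d \<and> \<not> A c d) \<or>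
    (A p a \<and> A p b \<and> A p c \<and> \<not> A p d \<and> \<not> A q a \<and> A q b \<and> A q c \<and> A q d \<and> \<not> A r a \<and> A r b \<and> A r c \<and> A r d \<and> \<not> A a b \<and> \<not> A a c \<and> A a d \<and> \<not> A b c \<and> A b d \<and> \<not> A c d) \<or>
    (A p a \<and> \<not> A p b \<and> A p c \<and> A p d \<and> \<not> A q a \<and> A q b \<and> A q c \<and> A q d \<and> A r a \<and> A r b \<and> A r c \<and> \<not> A r d \<and> A a b \<and> \<not> A a c \<and> A a d \<and> \<not> A b c \<and> A b d \<and> \<not> A c d) \<or>
    (\<not> A p a \<and> A p b \<and> A p c \<and> A p d \<and> A q a \<and> A q b \<and> A q c \<and> \<not> A q d \<and> A r a \<and> \<not> A r b \<and> A r c \<and> A r d \<and> A a b \<and> \<not> A a c \<and> A a d \<and> \<not> A b c \<and> A b d \<and> \<not> A c d) \<or>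
    (A p a \<and> A p b \<and> A p c \<and> \<not> A p d \<and> A q a \<and> \<not> A q b \<and> A q c \<and> A q d \<and> \<not> A r a \<and> A r b \<and> A r c \<and> A r d \<and> A a b \<and> \<not> A a c \<and> A a d \<and> \<not> A b c \<and> A b d \<and> \<not> A c d) \<or>
    (\<not> A p a \<and> A p b \<and> A p c \<and> A p d \<and> A q a \<and> A q b \<and> \<not> A q c \<and> A q d \<and> A r a \<and> A r b \<and> A r c \<and> \<not> A r d \<and> \<not> A a b \<and> A a c \<and> A a d \<and> \<not> A b c \<and> A b d \<and> \<not> A c d) \<or>
    (A p a \<and> A p b \<and> A p c \<and> \<not> A p d \<and> \<not> A q a \<and> A q b \<and> A q c \<and> A q d \<and> A r a \<and> A r b \<and> \<not> A r c \<and> A r d \<and> \<not> A a b \<and> A a c \<and> A a d \<and> \<not> A b c \<and> A b d \<and> \<not> A c d) \<or>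
    (A p a \<and> A p b \<and> \<not> A p c \<and> A p d \<and> A q a \<and> A q b \<and> A q c \<and> \<not> A q d \<and> \<not> A r a \<and> A r b \<and> A r c \<and> A r d \<and> \<not> A a b \<and> A a c \<and> A a d \<and> \<not> A b c \<and> A b d \<and> \<not> A c d) \<or>
    (\<not> A p a \<and> A p b \<and> A p c \<and> A p d \<and> \<not> A q a \<and> A q b \<and> A q c \<and> A q d \<and> \<not> A r a \<and> A r b \<and> A r c \<and> A r d \<and> \<not> A a b \<and> \<not> A a c \<and> \<not> A a d \<and> A b c \<and> \<not> A b d \<and> A c d) \<or>
    (\<not> A p a \<and> A p b \<and> A p c \<and> A p d \<and> \<not> A q a \<and> A q b \<and> A q c \<and> A q d \<and> A r a \<and> \<not> A r b \<and> A r c \<and> A r d \<and> A a b \<and> \<not> A a c \<and> \<not> A a d \<and> A b c \<and> \<not> A b d \<and> A c d) \<or>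
    (\<not> A p a \<and> A p b \<and> A p c \<and> A p d \<and> A q a \<and> \<not> A q b \<and> A q c \<and> A q d \<and> \<not> A r a \<and> A r b \<and> A r c \<and> A r d \<and> A a b \<and> \<not> A a c \<and> \<not> A a d \<and> A b c \<and> \<not> A b d \<and> A c d) \<or>
    (A p a \<and> \<not> A p b \<and> A p c \<and> A p d \<and> \<not> A q a \<and> A q b \<and> A q c \<and> A q d \<and> \<not> A r a \<and> A r b \<and> A r c \<and> A r d \<and> A a b \<and> \<not> A a c \<and> \<not> A a d \<and> A b c \<and> \<not> A b d \<and> A c d) \<or>
    (\<not> A p a \<and> A p b \<and> A p c \<and> A p d \<and> \<not> A q a \<and> A q b \<and> A q c \<and> A q d \<and> A r a \<and> A r b \<and> \<not> A r c \<and> A r d \<and> \<not> A a b \<and> A a c \<and> \<not> A a d \<and> A b c \<and> \<not> A b d \<and> A c d) \<or>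
    (\<not> A p a \<and> A p b \<and> A p c \<and> A p d \<and> A q a \<and> A q b \<and> \<not> A q c \<and> A q d \<and> \<not> A r a \<and> A r b \<and> A r c \<and> A r d \<and> \<not> A a b \<and> A a c \<and> \<not> A a d \<and> A b c \<and> \<not> A b d \<and> A c d) \<or>
    (A p a \<and> A p b \<and> \<not> A p c \<and> A p d \<and> \<not> A q a \<and> A q b \<and> A q c \<and> A q d \<and> \<not> A r a \<and> A r b \<and> A r c \<and> A r d \<and> \<not> A a b \<and> A a c \<and> \<not> A a d \<and> A b c \<and> \<not> A b d \<and> A c d) \<or>
    (A p a \<and> \<not> A p b \<and> A p c \<and> A p d \<and> \<not> A q a \<and> A q b \<and> A q c \<and> A q d \<and> A r a \<and> A r b \<and> \<not> A r c \<and> A r d \<and> A a b \<and> A a c \<and> \<not> A a d \<and> A b c \<and> \<not> A b d \<and> A c d) \<or>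
    (\<not> A p a \<and> A p b \<and> A p c \<and> A p d \<and> A q a \<and> A q b \<and> \<not> A q c \<and> A q d \<and> A r a \<and> \<not> A r b \<and> A r c \<and> A r d \<and> A a b \<and> A a c \<and> \<not> A a d \<and> A b c \<and> \<not> A b d \<and> A c d) \<or>
    (A p a \<and> A p b \<and> \<not> A p c \<and> A p d \<and> A q a \<and> \<not> A q b \<and> A q c \<and> A q d \<and> \<not> A r a \<and> A r b \<and> A r c \<and> A r d \<and> A a b \<and> A a c \<and> \<not> A a d \<and> A b c \<and> \<not> A b d \<and> A c d) \<or>
    (\<not> A p a \<and> A p b \<and> A p c \<and> A p d \<and> \<not> A q a \<and> A q b \<and> A q c \<and> A q d \<and> A r a \<and> A r b \<and> A r c \<and> \<not> A r d \<and> \<not> A a b \<and> \<not> A a c \<and> A a d \<and> A b c \<and> \<not> A b d \<and> A c d) \<or>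
    (\<not> A p a \<and> A p b \<and> A p c \<and> A p d \<and> A q a \<and> A q b \<and> A q c \<and> \<not> A q d \<and> \<not> A r a \<and> A r b \<and> A r c \<and> A r d \<and> \<not> A a b \<and> \<not> A a c \<and> A a d \<and> A b c \<and> \<not> A b d \<and> A c d) \<or>
    (A p a \<and> A p b \<and> A p c \<and> \<not> A p d \<and> \<not> A q a \<and> A q b \<and> A q c \<and> A q d \<and> \<not> A r a \<and> A r b \<and> A r c \<and> A r d \<and> \<not> A a b \<and> \<not> A a c \<and> A a d \<and> A b c \<and> \<not> A b d \<and> A c d) \<or>
    (\<not> A p a \<and> A p b \<and> A p c \<and> A p d \<and> A q a \<and> \<not> A q b \<and> A q c \<and> A q d \<and> A r a \<and> A r b \<and> A r c \<and> \<not> A r d \<and> A a b \<and> \<not> A a c \<and> A a d \<and> A b c \<and> \<not> A b d \<and> A c d) \<or>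
    (A p a \<and> A p b \<and> A p c \<and> \<not> A p d \<and> \<not> A q a \<and> A q b \<and> A q c \<and> A q d \<and> A r a \<and> \<not> A r b \<and> A r c \<and> A r d \<and> A a b \<and> \<not> A a c \<and> A a d \<and> A b c \<and> \<not> A b d \<and> A c d) \<or>
    (A p a \<and> \<not> A p b \<and> A p c \<and> A p d \<and> A q a \<and> A q b \<and> A q c \<and> \<not> A q d \<and> \<not> A r a \<and> A r b \<and> A r c \<and> A r d \<and> A a b \<and> \<not> A a c \<and> A a d \<and> A b c \<and> \<not> A b d \<and> A c d) \<or>
    (A p a \<and> A p b \<and> \<not> A p c \<and> A p d \<and> \<not> A q a \<and> A q b \<and> A q c \<and> A q d \<and> A r a \<and> A r b \<and> A r c \<and> \<not> A r d \<and> \<not> A a b \<and> A a c \<and> A a d \<and> A b c \<and> \<not> A b d \<and> A c d) \<or>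
    (\<not> A p a \<and> A p b \<and> A p c \<and> A p d \<and> A q a \<and> A q b \<and> A q c \<and> \<not> A q d \<and> A r a \<and> A r b \<and> \<not> A r c \<and> A r d \<and> \<not> A a b \<and> A a c \<and> A a d \<and> A b c \<and> \<not> A b d \<and> A c d) \<or>
    (A p a \<and> A p b \<and> A p c \<and> \<not> A p d \<and> A q a \<and> A q b \<and> \<not> A q c \<and> A q d \<and> \<not> A r a \<and> A r b \<and> A r c \<and> A r d \<and> \<not> A a b \<and> A a c \<and> A a d \<and> A b c \<and> \<not> A b d \<and> A c d)"
proof -
  note deg' = deg[simplified]
  note C' = C[unfolded Ccond_def, simplified]
  show ?thesis using rev irr kn deg' C' by (smt (z3))
qed

lemma cases9:
  fixes A :: "'a \<Rightarrow> 'a \<Rightarrow> bool"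
  assumes rev: "A v1 v0 = (\<not> A v0 v1)" "A p v0 = (\<not> A v0 p)" "A q v0 = (\<not> A v0 q)" "A r v0 = (\<not> A v0 r)" "A a v0 = (\<not> A v0 a)" "A b v0 = (\<not> A v0 b)" "A c v0 = (\<not> A v0 c)" "A d v0 = (\<not> A v0 d)" "A p v1 = (\<not> A v1 p)" "A q v1 = (\<not> A v1 q)" "A r v1 = (\<not> A v1 r)" "A a v1 = (\<not> A v1 a)" "A b v1 = (\<not> A v1 b)" "A c v1 = (\<not> A v1 c)" "A d v1 = (\<not> A v1 d)" "A q p = (\<not> A p q)" "A r p = (\<not> A p r)" "A a p = (\<not> A p a)" "A b p = (\<not> A p b)" "A c p = (\<not> A p c)" "A d p = (\<not> A p d)" "A r q = (\<not> A q r)" "A a q = (\<not> A q a)" "A b q = (\<not> A q b)" "A c q = (\<not> A q c)" "A d q = (\<not> A q d)" "A a r = (\<not> A r a)" "A b r = (\<not> A r b)" "A c r = (\<not> A r c)" "A d r = (\<not> A r d)" "A b a = (\<not> A a b)" "A c a = (\<not> A a c)" "A d a = (\<not> A a d)" "A c b = (\<not> A b c)" "A d b = (\<not> A b d)" "A d c = (\<not> A c d)"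
    and irr: "\<not> A v0 v0" "\<not> A v1 v1" "\<not> A p p" "\<not> A q q" "\<not> A r r" "\<not> A a a" "\<not> A b b" "\<not> A c c" "\<not> A d d"
    and kn: "A v0 v1" "A v0 p" "A v0 q" "A v0 r" "\<not> A v0 a" "\<not> A v0 b" "\<not> A v0 c" "\<not> A v0 d" "A v1 p" "A v1 q" "A v1 r" "A v1 a" "\<not> A v1 b" "\<not> A v1 c" "\<not> A v1 d" "A p q" "\<not> A p r" "A q r"
    and deg: "\<forall>x\<in>{v0,v1,p,q,r,a,b,c,d}. sum_list (map (\<lambda>y. if A x y then 1 else 0) [v0,v1,p,q,r,a,b,c,d]) = (4::int)"
    and C: "Ccond {v0,v1,p,q,r,a,b,c,d} A"
    and dist: "distinct [v0,v1,p,q,r,a,b,c,d]" and Vs: "set [v0,v1,p,q,r,a,b,c,d] = V"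
  shows "tourn_iso V A DD_V DD_A \<or> tourn_iso V A {0..<9} (mat_rel M1) \<or> tourn_iso V A {0..<9} (mat_rel M2)"
proof -
  have D: "(\<not> A p a \<and> A p b \<and> A p c \<and> A p d \<and> \<not> A q a \<and> A q b \<and> A q c \<and> A q d \<and> \<not> A r a \<and> A r b \<and> A r c \<and> A r d \<and> \<not> A a b \<and> \<not> A a c \<and> \<not> A a d \<and> \<not> A b c \<and> A b d \<and> \<not> A c d) \<or>
    (\<not> A p a \<and> A p b \<and> A p c \<and> A p d \<and> \<not> A q a \<and> A q b \<and> A q c \<and> A q d \<and> A r a \<and> \<not> A r b \<and> A r c \<and> A r d \<and> A a b \<and> \<not> A a c \<and> \<not> A a d \<and> \<not> A b c \<and> A b d \<and> \<not> A c d) \<or>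
    (\<not> A p a \<and> A p b \<and> A p c \<and> A p d \<and> A q a \<and> \<not> A q b \<and> A q c \<and> A q d \<and> \<not> A r a \<and> A r b \<and> A r c \<and> A r d \<and> A a b \<and> \<not> A a c \<and> \<not> A a d \<and> \<not> A b c \<and> A b d \<and> \<not> A c d) \<or>
    (A p a \<and> \<not> A p b \<and> A p c \<and> A p d \<and> \<not> A q a \<and> A q b \<and> A q c \<and> A q d \<and> \<not> A r a \<and> A r b \<and> A r c \<and> A r d \<and> A a b \<and> \<not> A a c \<and> \<not> A a d \<and> \<not> A b c \<and> A b d \<and> \<not> A c d) \<or>
    (\<not> A p a \<and> A p b \<and> A p c \<and> A p d \<and> \<not> A q a \<and> A q b \<and> A q c \<and> A q d \<and> A r a \<and> A r b \<and> \<not> A r c \<and> A r d \<and> \<not> A a b \<and> A a c \<and> \<not> A a d \<and> \<not> A b c \<and> A b d \<and> \<not> A c d) \<or>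
    (\<not> A p a \<and> A p b \<and> A p c \<and> A p d \<and> A q a \<and> A q b \<and> \<not> A q c \<and> A q d \<and> \<not> A r a \<and> A r b \<and> A r c \<and> A r d \<and> \<not> A a b \<and> A a c \<and> \<not> A a d \<and> \<not> A b c \<and> A b d \<and> \<not> A c d) \<or>
    (A p a \<and> A p b \<and> \<not> A p c \<and> A p d \<and> \<not> A q a \<and> A q b \<and> A q c \<and> A q d \<and> \<not> A r a \<and> A r b \<and> A r c \<and> A r d \<and> \<not> A a b \<and> A a c \<and> \<not> A a d \<and> \<not> A b c \<and> A b d \<and> \<not> A c d) \<or>
    (\<not> A p a \<and> A p b \<and> A p c \<and> A p d \<and> A q a \<and> \<not> A q b \<and> A q c \<and> A q d \<and> A r a \<and> A r b \<and> \<not> A r c \<and> A r d \<and> A a b \<and> A a c \<and> \<not> A a d \<and> \<not> A b c \<and> A b d \<and> \<not> A c d) \<or>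
    (A p a \<and> A p b \<and> \<not> A p c \<and> A p d \<and> \<not> A q a \<and> A q b \<and> A q c \<and> A q d \<and> A r a \<and> \<not> A r b \<and> A r c \<and> A r d \<and> A a b \<and> A a c \<and> \<not> A a d \<and> \<not> A b c \<and> A b d \<and> \<not> A c d) \<or>
    (A p a \<and> \<not> A p b \<and> A p c \<and> A p d \<and> A q a \<and> A q b \<and> \<not> A q c \<and> A q d \<and> \<not> A r a \<and> A r b \<and> A r c \<and> A r d \<and> A a b \<and> A a c \<and> \<not> A a d \<and> \<not> A b c \<and> A b d \<and> \<not> A c d) \<or>
    (\<not> A p a \<and> A p b \<and> A p c \<and> A p d \<and> \<not> A q a \<and> A q b \<and> A q c \<and> A q d \<and> A r a \<and> A r b \<and> A r c \<and> \<not> A r d \<and> \<not> A a b \<and> \<not> A a c \<and> A a d \<and> \<not> A b c \<and> A b d \<and> \<not> A c d) \<or>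
    (\<not> A p a \<and> A p b \<and> A p c \<and> A p d \<and> A q a \<and> A q b \<and> A q c \<and> \<not> A q d \<and> \<not> A r a \<and> A r b \<and> A r c \<and> A r d \<and> \<not> A a b \<and> \<not> A a c \<and> A a d \<and> \<not> A b c \<and> A b d \<and> \<not> A c d) \<or>
    (A p a \<and> A p b \<and> A p c \<and> \<not> A p d \<and> \<not> A q a \<and> A q b \<and> A q c \<and> A q d \<and> \<not> A r a \<and> A r b \<and> A r c \<and> A r d \<and> \<not> A a b \<and> \<not> A a c \<and> A a d \<and> \<not> A b c \<and> A b d \<and> \<not> A c d) \<or>
    (A p a \<and> \<not> A p b \<and> A p c \<and> A p d \<and> \<not> A q a \<and> A q b \<and> A q c \<and> A q d \<and> A r a \<and> A r b \<and> A r c \<and> \<not> A r d \<and> A a b \<and> \<not> A a c \<and> A a d \<and> \<not> A b c \<and> A b d \<and> \<not> A c d) \<or>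
    (\<not> A p a \<and> A p b \<and> A p c \<and> A p d \<and> A q a \<and> A q b \<and> A q c \<and> \<not> A q d \<and> A r a \<and> \<not> A r b \<and> A r c \<and> A r d \<and> A a b \<and> \<not> A a c \<and> A a d \<and> \<not> A b c \<and> A b d \<and> \<not> A c d) \<or>
    (A p a \<and> A p b \<and> A p c \<and> \<not> A p d \<and> A q a \<and> \<not> A q b \<and> A q c \<and> A q d \<and> \<not> A r a \<and> A r b \<and> A r c \<and> A r d \<and> A a b \<and> \<not> A a c \<and> A a d \<and> \<not> A b c \<and> A b d \<and> \<not> A c d) \<or>
    (\<not> A p a \<and> A p b \<and> A p c \<and> A p d \<and> A q a \<and> A q b \<and> \<not> A q c \<and> A q d \<and> A r a \<and> A r b \<and> A r c \<and> \<not> A r d \<and> \<not> A a b \<and> A a c \<and> A a d \<and> \<not> A b c \<and> A b d \<and> \<not> A c d) \<or>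
    (A p a \<and> A p b \<and> A p c \<and> \<not> A p d \<and> \<not> A q a \<and> A q b \<and> A q c \<and> A q d \<and> A r a \<and> A r b \<and> \<not> A r c \<and> A r d \<and> \<not> A a b \<and> A a c \<and> A a d \<and> \<not> A b c \<and> A b d \<and> \<not> A c d) \<or>
    (A p a \<and> A p b \<and> \<not> A p c \<and> A p d \<and> A q a \<and> A q b \<and> A q c \<and> \<not> A q d \<and> \<not> A r a \<and> A r b \<and> A r c \<and> A r d \<and> \<not> A a b \<and> A a c \<and> A a d \<and> \<not> A b c \<and> A b d \<and> \<not> A c d) \<or>
    (\<not> A p a \<and> A p b \<and> A p c \<and> A p d \<and> \<not> A q a \<and> A q b \<and> A q c \<and> A q d \<and> \<not> A r a \<and> A r b \<and> A r c \<and> A r d \<and> \<not> A a b \<and> \<not> A a c \<and> \<not> A a d \<and> A b c \<and> \<not> A b d \<and> A c d) \<or>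
    (\<not> A p a \<and> A p b \<and> A p c \<and> A p d \<and> \<not> A q a \<and> A q b \<and> A q c \<and> A q d \<and> A r a \<and> \<not> A r b \<and> A r c \<and> A r d \<and> A a b \<and> \<not> A a c \<and> \<not> A a d \<and> A b c \<and> \<not> A b d \<and> A c d) \<or>
    (\<not> A p a \<and> A p b \<and> A p c \<and> A p d \<and> A q a \<and> \<not> A q b \<and> A q c \<and> A q d \<and> \<not> A r a \<and> A r b \<and> A r c \<and> A r d \<and> A a b \<and> \<not> A a c \<and> \<not> A a d \<and> A b c \<and> \<not> A b d \<and> A c d) \<or>
    (A p a \<and> \<not> A p b \<and> A p c \<and> A p d \<and> \<not> A q a \<and> A q b \<and> A q c \<and> A q d \<and> \<not> A r a \<and> A r b \<and> A r c \<and> A r d \<and> A a b \<and> \<not> A a c \<and> \<not> A a d \<and> A b c \<and> \<not> A b d \<and> A c d) \<or>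
    (\<not> A p a \<and> A p b \<and> A p c \<and> A p d \<and> \<not> A q a \<and> A q b \<and> A q c \<and> A q d \<and> A r a \<and> A r b \<and> \<not> A r c \<and> A r d \<and> \<not> A a b \<and> A a c \<and> \<not> A a d \<and> A b c \<and> \<not> A b d \<and> A c d) \<or>
    (\<not> A p a \<and> A p b \<and> A p c \<and> A p d \<and> A q a \<and> A q b \<and> \<not> A q c \<and> A q d \<and> \<not> A r a \<and> A r b \<and> A r c \<and> A r d \<and> \<not> A a b \<and> A a c \<and> \<not> A a d \<and> A b c \<and> \<not> A b d \<and> A c d) \<or>
    (A p a \<and> A p b \<and> \<not> A p c \<and> A p d \<and> \<not> A q a \<and> A q b \<and> A q c \<and> A q d \<and> \<not> A r a \<and> A r b \<and> A r c \<and> A r d \<and> \<not> A a b \<and> A a c \<and> \<not> A a d \<and> A b c \<and> \<not> A b d \<and> A c d) \<or>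
    (A p a \<and> \<not> A p b \<and> A p c \<and> A p d \<and> \<not> A q a \<and> A q b \<and> A q c \<and> A q d \<and> A r a \<and> A r b \<and> \<not> A r c \<and> A r d \<and> A a b \<and> A a c \<and> \<not> A a d \<and> A b c \<and> \<not> A b d \<and> A c d) \<or>
    (\<not> A p a \<and> A p b \<and> A p c \<and> A p d \<and> A q a \<and> A q b \<and> \<not> A q c \<and> A q d \<and> A r a \<and> \<not> A r b \<and> A r c \<and> A r d \<and> A a b \<and> A a c \<and> \<not> A a d \<and> A b c \<and> \<not> A b d \<and> A c d) \<or>
    (A p a \<and> A p b \<and> \<not> A p c \<and> A p d \<and> A q a \<and> \<not> A q b \<and> A q c \<and> A q d \<and> \<not> A r a \<and> A r b \<and> A r c \<and> A r d \<and> A a b \<and> A a c \<and> \<not> A a d \<and> A b c \<and> \<not> A b d \<and> A c d) \<or>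
    (\<not> A p a \<and> A p b \<and> A p c \<and> A p d \<and> \<not> A q a \<and> A q b \<and> A q c \<and> A q d \<and> A r a \<and> A r b \<and> A r c \<and> \<not> A r d \<and> \<not> A a b \<and> \<not> A a c \<and> A a d \<and> A b c \<and> \<not> A b d \<and> A c d) \<or>
    (\<not> A p a \<and> A p b \<and> A p c \<and> A p d \<and> A q a \<and> A q b \<and> A q c \<and> \<not> A q d \<and> \<not> A r a \<and> A r b \<and> A r c \<and> A r d \<and> \<not> A a b \<and> \<not> A a c \<and> A a d \<and> A b c \<and> \<not> A b d \<and> A c d) \<or>
    (A p a \<and> A p b \<and> A p c \<and> \<not> A p d \<and> \<not> A q a \<and> A q b \<and> A q c \<and> A q d \<and> \<not> A r a \<and> A r b \<and> A r c \<and> A r d \<and> \<not> A a b \<and> \<not> A a c \<and> A a d \<and> A b c \<and> \<not> A b d \<and> A c d) \<or>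
    (\<not> A p a \<and> A p b \<and> A p c \<and> A p d \<and> A q a \<and> \<not> A q b \<and> A q c \<and> A q d \<and> A r a \<and> A r b \<and> A r c \<and> \<not> A r d \<and> A a b \<and> \<not> A a c \<and> A a d \<and> A b c \<and> \<not> A b d \<and> A c d) \<or>
    (A p a \<and> A p b \<and> A p c \<and> \<not> A p d \<and> \<not> A q a \<and> A q b \<and> A q c \<and> A q d \<and> A r a \<and> \<not> A r b \<and> A r c \<and> A r d \<and> A a b \<and> \<not> A a c \<and> A a d \<and> A b c \<and> \<not> A b d \<and> A c d) \<or>
    (A p a \<and> \<not> A p b \<and> A p c \<and> A p d \<and> A q a \<and> A q b \<and> A q c \<and> \<not> A q d \<and> \<not> A r a \<and> A r b \<and> A r c \<and> A r d \<and> A a b \<and> \<not> A a c \<and> A a d \<and> A b c \<and> \<not> A b d \<and> A c d) \<or>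
    (A p a \<and> A p b \<and> \<not> A p c \<and> A p d \<and> \<not> A q a \<and> A q b \<and> A q c \<and> A q d \<and> A r a \<and> A r b \<and> A r c \<and> \<not> A r d \<and> \<not> A a b \<and> A a c \<and> A a d \<and> A b c \<and> \<not> A b d \<and> A c d) \<or>
    (\<not> A p a \<and> A p b \<and> A p c \<and> A p d \<and> A q a \<and> A q b \<and> A q c \<and> \<not> A q d \<and> A r a \<and> A r b \<and> \<not> A r c \<and> A r d \<and> \<not> A a b \<and> A a c \<and> A a d \<and> A b c \<and> \<not> A b d \<and> A c d) \<or>
    (A p a \<and> A p b \<and> A p c \<and> \<not> A p d \<and> A q a \<and> A q b \<and> \<not> A q c \<and> A q d \<and> \<not> A r a \<and> A r b \<and> A r c \<and> A r d \<and> \<not> A a b \<and> A a c \<and> A a d \<and> A b c \<and> \<not> A b d \<and> A c d)"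
    by (rule smt9[OF rev irr kn deg C])
  from D show ?thesis
  proof (elim disjE)
  assume h: "(\<not> A p a \<and> A p b \<and> A p c \<and> A p d \<and> \<not> A q a \<and> A q b \<and> A q c \<and> A q d \<and> \<not> A r a \<and> A r b \<and> A r c \<and> A r d \<and> \<not> A a b \<and> \<not> A a c \<and> \<not> A a d \<and> \<not> A b c \<and> A b d \<and> \<not> A c d)"
  show ?thesis
    apply (rule disjI1)
    apply (rule iso_lists[OF dist Vs, where ts="[(0,0),(0,1),(1,0),(1,1),(1,2),(0,2),(2,0),(2,2),(2,1)]"])
    using h kn by (simp_all add: rev irr DD_A_def cyc3_def DD_V_def)
next
  assume h: "(\<not> A p a \<and> A p b \<and> A p c \<and> A p d \<and> \<not> A q a \<and> A q b \<and> A q c \<and> A q d \<and> A r a \<and> \<not> A r b \<and> A r c \<and> A r d \<and> A a b \<and> \<not> A a c \<and> \<not> A a d \<and> \<not> A b c \<and> A b d \<and> \<not> A c d)"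
  show ?thesis
    apply (rule disjI2, rule disjI1)
    apply (rule iso_lists[OF dist Vs, where ts="[0,1,3,4,2,5,6,8,7]"])
    using h kn by (simp_all add: rev irr mat_rel_def M1_def)
next
  assume h: "(\<not> A p a \<and> A p b \<and> A p c \<and> A p d \<and> A q a \<and> \<not> A q b \<and> A q c \<and> A q d \<and> \<not> A r a \<and> A r b \<and> A r c \<and> A r d \<and> A a b \<and> \<not> A a c \<and> \<not> A a d \<and> \<not> A b c \<and> A b d \<and> \<not> A c d)"
  show ?thesis
    apply (rule disjI2, rule disjI1)
    apply (rule iso_lists[OF dist Vs, where ts="[0,1,4,2,3,5,6,8,7]"])
    using h kn by (simp_all add: rev irr mat_rel_def M1_def)
next
  assume h: "(A p a \<and> \<not> A p b \<and> A p c \<and> A p d \<and> \<not> A q a \<and> A q b \<and> A q c \<and> A q d \<and> \<not> A r a \<and> A r b \<and> A r c \<and> A r d \<and> A a b \<and> \<not> A a c \<and> \<not> A a d \<and> \<not> A b c \<and> A b d \<and> \<not> A c d)"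
  show ?thesis
    apply (rule disjI2, rule disjI1)
    apply (rule iso_lists[OF dist Vs, where ts="[0,1,2,3,4,5,6,8,7]"])
    using h kn by (simp_all add: rev irr mat_rel_def M1_def)
next
  assume h: "(\<not> A p a \<and> A p b \<and> A p c \<and> A p d \<and> \<not> A q a \<and> A q b \<and> A q c \<and> A q d \<and> A r a \<and> A r b \<and> \<not> A r c \<and> A r d \<and> \<not> A a b \<and> A a c \<and> \<not> A a d \<and> \<not> A b c \<and> A b d \<and> \<not> A c d)"
  show ?thesis
    apply (rule disjI2, rule disjI1)
    apply (rule iso_lists[OF dist Vs, where ts="[0,1,3,4,2,5,7,6,8]"])
    using h kn by (simp_all add: rev irr mat_rel_def M1_def)
next
  assume h: "(\<not> A p a \<and> A p b \<and> A p c \<and> A p d \<and> A q a \<and> A q b \<and> \<not> A q c \<and> A q d \<and> \<not> A r a \<and> A r b \<and> A r c \<and> A r d \<and> \<not> A a b \<and> A a c \<and> \<not> A a d \<and> \<not> A b c \<and> A b d \<and> \<not> A c d)"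
  show ?thesis
    apply (rule disjI2, rule disjI1)
    apply (rule iso_lists[OF dist Vs, where ts="[0,1,4,2,3,5,7,6,8]"])
    using h kn by (simp_all add: rev irr mat_rel_def M1_def)
next
  assume h: "(A p a \<and> A p b \<and> \<not> A p c \<and> A p d \<and> \<not> A q a \<and> A q b \<and> A q c \<and> A q d \<and> \<not> A r a \<and> A r b \<and> A r c \<and> A r d \<and> \<not> A a b \<and> A a c \<and> \<not> A a d \<and> \<not> A b c \<and> A b d \<and> \<not> A c d)"
  show ?thesis
    apply (rule disjI2, rule disjI1)
    apply (rule iso_lists[OF dist Vs, where ts="[0,1,2,3,4,5,7,6,8]"])
    using h kn by (simp_all add: rev irr mat_rel_def M1_def)
next
  assume h: "(\<not> A p a \<and> A p b \<and> A p c \<and> A p d \<and> A q a \<and> \<not> A q b \<and> A q c \<and> A q d \<and> A r a \<and> A r b \<and> \<not> A r c \<and> A r d \<and> A a b \<and> A a c \<and> \<not> A a d \<and> \<not> A b c \<and> A b d \<and> \<not> A c d)"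
  show ?thesis
    apply (rule disjI2, rule disjI2)
    apply (rule iso_lists[OF dist Vs, where ts="[4,3,7,5,8,1,6,2,0]"])
    using h kn by (simp_all add: rev irr mat_rel_def M2_def)
next
  assume h: "(A p a \<and> A p b \<and> \<not> A p c \<and> A p d \<and> \<not> A q a \<and> A q b \<and> A q c \<and> A q d \<and> A r a \<and> \<not> A r b \<and> A r c \<and> A r d \<and> A a b \<and> A a c \<and> \<not> A a d \<and> \<not> A b c \<and> A b d \<and> \<not> A c d)"
  show ?thesis
    apply (rule disjI2, rule disjI2)
    apply (rule iso_lists[OF dist Vs, where ts="[4,3,8,7,5,1,6,2,0]"])
    using h kn by (simp_all add: rev irr mat_rel_def M2_def)
next
  assume h: "(A p a \<and> \<not> A p b \<and> A p c \<and> A p d \<and> A q a \<and> A q b \<and> \<not> A q c \<and> A q d \<and> \<not> A r a \<and> A r b \<and> A r c \<and> A r d \<and> A a b \<and> A a c \<and> \<not> A a d \<and> \<not> A b c \<and> A b d \<and> \<not> A c d)"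
  show ?thesis
    apply (rule disjI2, rule disjI2)
    apply (rule iso_lists[OF dist Vs, where ts="[4,3,5,8,7,1,6,2,0]"])
    using h kn by (simp_all add: rev irr mat_rel_def M2_def)
next
  assume h: "(\<not> A p a \<and> A p b \<and> A p c \<and> A p d \<and> \<not> A q a \<and> A q b \<and> A q c \<and> A q d \<and> A r a \<and> A r b \<and> A r c \<and> \<not> A r d \<and> \<not> A a b \<and> \<not> A a c \<and> A a d \<and> \<not> A b c \<and> A b d \<and> \<not> A c d)"
  show ?thesis
    apply (rule disjI2, rule disjI1)
    apply (rule iso_lists[OF dist Vs, where ts="[0,1,3,4,2,5,8,7,6]"])
    using h kn by (simp_all add: rev irr mat_rel_def M1_def)
next
  assume h: "(\<not> A p a \<and> A p b \<and> A p c \<and> A p d \<and> A q a \<and> A q b \<and> A q c \<and> \<not> A q d \<and> \<not> A r a \<and> A r b \<and> A r c \<and> A r d \<and> \<not> A a b \<and> \<not> A a c \<and> A a d \<and> \<not> A b c \<and> A b d \<and> \<not> A c d)"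
  show ?thesis
    apply (rule disjI2, rule disjI1)
    apply (rule iso_lists[OF dist Vs, where ts="[0,1,4,2,3,5,8,7,6]"])
    using h kn by (simp_all add: rev irr mat_rel_def M1_def)
next
  assume h: "(A p a \<and> A p b \<and> A p c \<and> \<not> A p d \<and> \<not> A q a \<and> A q b \<and> A q c \<and> A q d \<and> \<not> A r a \<and> A r b \<and> A r c \<and> A r d \<and> \<not> A a b \<and> \<not> A a c \<and> A a d \<and> \<not> A b c \<and> A b d \<and> \<not> A c d)"
  show ?thesis
    apply (rule disjI2, rule disjI1)
    apply (rule iso_lists[OF dist Vs, where ts="[0,1,2,3,4,5,8,7,6]"])
    using h kn by (simp_all add: rev irr mat_rel_def M1_def)
next
  assume h: "(A p a \<and> \<not> A p b \<and> A p c \<and> A p d \<and> \<not> A q a \<and> A q b \<and> A q c \<and> A q d \<and> A r a \<and> A r b \<and> A r c \<and> \<not> A r d \<and> A a b \<and> \<not> A a c \<and> A a d \<and> \<not> A b c \<and> A b d \<and> \<not> A c d)"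
  show ?thesis
    apply (rule disjI2, rule disjI2)
    apply (rule iso_lists[OF dist Vs, where ts="[4,3,8,7,5,1,2,0,6]"])
    using h kn by (simp_all add: rev irr mat_rel_def M2_def)
next
  assume h: "(\<not> A p a \<and> A p b \<and> A p c \<and> A p d \<and> A q a \<and> A q b \<and> A q c \<and> \<not> A q d \<and> A r a \<and> \<not> A r b \<and> A r c \<and> A r d \<and> A a b \<and> \<not> A a c \<and> A a d \<and> \<not> A b c \<and> A b d \<and> \<not> A c d)"
  show ?thesis
    apply (rule disjI2, rule disjI2)
    apply (rule iso_lists[OF dist Vs, where ts="[4,3,7,5,8,1,2,0,6]"])
    using h kn by (simp_all add: rev irr mat_rel_def M2_def)
next
  assume h: "(A p a \<and> A p b \<and> A p c \<and> \<not> A p d \<and> A q a \<and> \<not> A q b \<and> A q c \<and> A q d \<and> \<not> A r a \<and> A r b \<and> A r c \<and> A r d \<and> A a b \<and> \<not> A a c \<and> A a d \<and> \<not> A b c \<and> A b d \<and> \<not> A c d)"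
  show ?thesis
    apply (rule disjI2, rule disjI2)
    apply (rule iso_lists[OF dist Vs, where ts="[4,3,5,8,7,1,2,0,6]"])
    using h kn by (simp_all add: rev irr mat_rel_def M2_def)
next
  assume h: "(\<not> A p a \<and> A p b \<and> A p c \<and> A p d \<and> A q a \<and> A q b \<and> \<not> A q c \<and> A q d \<and> A r a \<and> A r b \<and> A r c \<and> \<not> A r d \<and> \<not> A a b \<and> A a c \<and> A a d \<and> \<not> A b c \<and> A b d \<and> \<not> A c d)"
  show ?thesis
    apply (rule disjI2, rule disjI2)
    apply (rule iso_lists[OF dist Vs, where ts="[4,3,7,5,8,1,0,6,2]"])
    using h kn by (simp_all add: rev irr mat_rel_def M2_def)
next
  assume h: "(A p a \<and> A p b \<and> A p c \<and> \<not> A p d \<and> \<not> A q a \<and> A q b \<and> A q c \<and> A q d \<and> A r a \<and> A r b \<and> \<not> A r c \<and> A r d \<and> \<not> A a b \<and> A a c \<and> A a d \<and> \<not> A b c \<and> A b d \<and> \<not> A c d)"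
  show ?thesis
    apply (rule disjI2, rule disjI2)
    apply (rule iso_lists[OF dist Vs, where ts="[4,3,8,7,5,1,0,6,2]"])
    using h kn by (simp_all add: rev irr mat_rel_def M2_def)
next
  assume h: "(A p a \<and> A p b \<and> \<not> A p c \<and> A p d \<and> A q a \<and> A q b \<and> A q c \<and> \<not> A q d \<and> \<not> A r a \<and> A r b \<and> A r c \<and> A r d \<and> \<not> A a b \<and> A a c \<and> A a d \<and> \<not> A b c \<and> A b d \<and> \<not> A c d)"
  show ?thesis
    apply (rule disjI2, rule disjI2)
    apply (rule iso_lists[OF dist Vs, where ts="[4,3,5,8,7,1,0,6,2]"])
    using h kn by (simp_all add: rev irr mat_rel_def M2_def)
next
  assume h: "(\<not> A p a \<and> A p b \<and> A p c \<and> A p d \<and> \<not> A q a \<and> A q b \<and> A q c \<and> A q d \<and> \<not> A r a \<and> A r b \<and> A r c \<and> A r d \<and> \<not> A a b \<and> \<not> A a c \<and> \<not> A a d \<and> A b c \<and> \<not> A b d \<and> A c d)"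
  show ?thesis
    apply (rule disjI1)
    apply (rule iso_lists[OF dist Vs, where ts="[(0,0),(0,1),(1,0),(1,1),(1,2),(0,2),(2,0),(2,1),(2,2)]"])
    using h kn by (simp_all add: rev irr DD_A_def cyc3_def DD_V_def)
next
  assume h: "(\<not> A p a \<and> A p b \<and> A p c \<and> A p d \<and> \<not> A q a \<and> A q b \<and> A q c \<and> A q d \<and> A r a \<and> \<not> A r b \<and> A r c \<and> A r d \<and> A a b \<and> \<not> A a c \<and> \<not> A a d \<and> A b c \<and> \<not> A b d \<and> A c d)"
  show ?thesis
    apply (rule disjI2, rule disjI1)
    apply (rule iso_lists[OF dist Vs, where ts="[0,1,3,4,2,5,6,7,8]"])
    using h kn by (simp_all add: rev irr mat_rel_def M1_def)
next
  assume h: "(\<not> A p a \<and> A p b \<and> A p c \<and> A p d \<and> A q a \<and> \<not> A q b \<and> A q c \<and> A q d \<and> \<not> A r a \<and> A r b \<and> A r c \<and> A r d \<and> A a b \<and> \<not> A a c \<and> \<not> A a d \<and> A b c \<and> \<not> A b d \<and> A c d)"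
  show ?thesis
    apply (rule disjI2, rule disjI1)
    apply (rule iso_lists[OF dist Vs, where ts="[0,1,4,2,3,5,6,7,8]"])
    using h kn by (simp_all add: rev irr mat_rel_def M1_def)
next
  assume h: "(A p a \<and> \<not> A p b \<and> A p c \<and> A p d \<and> \<not> A q a \<and> A q b \<and> A q c \<and> A q d \<and> \<not> A r a \<and> A r b \<and> A r c \<and> A r d \<and> A a b \<and> \<not> A a c \<and> \<not> A a d \<and> A b c \<and> \<not> A b d \<and> A c d)"
  show ?thesis
    apply (rule disjI2, rule disjI1)
    apply (rule iso_lists[OF dist Vs, where ts="[0,1,2,3,4,5,6,7,8]"])
    using h kn by (simp_all add: rev irr mat_rel_def M1_def)
next
  assume h: "(\<not> A p a \<and> A p b \<and> A p c \<and> A p d \<and> \<not> A q a \<and> A q b \<and> A q c \<and> A q d \<and> A r a \<and> A r b \<and> \<not> A r c \<and> A r d \<and> \<not> A a b \<and> A a c \<and> \<not> A a d \<and> A b c \<and> \<not> A b d \<and> A c d)"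
  show ?thesis
    apply (rule disjI2, rule disjI1)
    apply (rule iso_lists[OF dist Vs, where ts="[0,1,3,4,2,5,8,6,7]"])
    using h kn by (simp_all add: rev irr mat_rel_def M1_def)
next
  assume h: "(\<not> A p a \<and> A p b \<and> A p c \<and> A p d \<and> A q a \<and> A q b \<and> \<not> A q c \<and> A q d \<and> \<not> A r a \<and> A r b \<and> A r c \<and> A r d \<and> \<not> A a b \<and> A a c \<and> \<not> A a d \<and> A b c \<and> \<not> A b d \<and> A c d)"
  show ?thesis
    apply (rule disjI2, rule disjI1)
    apply (rule iso_lists[OF dist Vs, where ts="[0,1,4,2,3,5,8,6,7]"])
    using h kn by (simp_all add: rev irr mat_rel_def M1_def)
next
  assume h: "(A p a \<and> A p b \<and> \<not> A p c \<and> A p d \<and> \<not> A q a \<and> A q b \<and> A q c \<and> A q d \<and> \<not> A r a \<and> A r b \<and> A r c \<and> A r d \<and> \<not> A a b \<and> A a c \<and> \<not> A a d \<and> A b c \<and> \<not> A b d \<and> A c d)"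
  show ?thesis
    apply (rule disjI2, rule disjI1)
    apply (rule iso_lists[OF dist Vs, where ts="[0,1,2,3,4,5,8,6,7]"])
    using h kn by (simp_all add: rev irr mat_rel_def M1_def)
next
  assume h: "(A p a \<and> \<not> A p b \<and> A p c \<and> A p d \<and> \<not> A q a \<and> A q b \<and> A q c \<and> A q d \<and> A r a \<and> A r b \<and> \<not> A r c \<and> A r d \<and> A a b \<and> A a c \<and> \<not> A a d \<and> A b c \<and> \<not> A b d \<and> A c d)"
  show ?thesis
    apply (rule disjI2, rule disjI2)
    apply (rule iso_lists[OF dist Vs, where ts="[4,3,8,7,5,1,2,6,0]"])
    using h kn by (simp_all add: rev irr mat_rel_def M2_def)
next
  assume h: "(\<not> A p a \<and> A p b \<and> A p c \<and> A p d \<and> A q a \<and> A q b \<and> \<not> A q c \<and> A q d \<and> A r a \<and> \<not> A r b \<and> A r c \<and> A r d \<and> A a b \<and> A a c \<and> \<not> A a d \<and> A b c \<and> \<not> A b d \<and> A c d)"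
  show ?thesis
    apply (rule disjI2, rule disjI2)
    apply (rule iso_lists[OF dist Vs, where ts="[4,3,7,5,8,1,2,6,0]"])
    using h kn by (simp_all add: rev irr mat_rel_def M2_def)
next
  assume h: "(A p a \<and> A p b \<and> \<not> A p c \<and> A p d \<and> A q a \<and> \<not> A q b \<and> A q c \<and> A q d \<and> \<not> A r a \<and> A r b \<and> A r c \<and> A r d \<and> A a b \<and> A a c \<and> \<not> A a d \<and> A b c \<and> \<not> A b d \<and> A c d)"
  show ?thesis
    apply (rule disjI2, rule disjI2)
    apply (rule iso_lists[OF dist Vs, where ts="[4,3,5,8,7,1,2,6,0]"])
    using h kn by (simp_all add: rev irr mat_rel_def M2_def)
next
  assume h: "(\<not> A p a \<and> A p b \<and> A p c \<and> A p d \<and> \<not> A q a \<and> A q b \<and> A q c \<and> A q d \<and> A r a \<and> A r b \<and> A r c \<and> \<not> A r d \<and> \<not> A a b \<and> \<not> A a c \<and> A a d \<and> A b c \<and> \<not> A b d \<and> A c d)"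
  show ?thesis
    apply (rule disjI2, rule disjI1)
    apply (rule iso_lists[OF dist Vs, where ts="[0,1,3,4,2,5,7,8,6]"])
    using h kn by (simp_all add: rev irr mat_rel_def M1_def)
next
  assume h: "(\<not> A p a \<and> A p b \<and> A p c \<and> A p d \<and> A q a \<and> A q b \<and> A q c \<and> \<not> A q d \<and> \<not> A r a \<and> A r b \<and> A r c \<and> A r d \<and> \<not> A a b \<and> \<not> A a c \<and> A a d \<and> A b c \<and> \<not> A b d \<and> A c d)"
  show ?thesis
    apply (rule disjI2, rule disjI1)
    apply (rule iso_lists[OF dist Vs, where ts="[0,1,4,2,3,5,7,8,6]"])
    using h kn by (simp_all add: rev irr mat_rel_def M1_def)
next
  assume h: "(A p a \<and> A p b \<and> A p c \<and> \<not> A p d \<and> \<not> A q a \<and> A q b \<and> A q c \<and> A q d \<and> \<not> A r a \<and> A r b \<and> A r c \<and> A r d \<and> \<not> A a b \<and> \<not> A a c \<and> A a d \<and> A b c \<and> \<not> A b d \<and> A c d)"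
  show ?thesis
    apply (rule disjI2, rule disjI1)
    apply (rule iso_lists[OF dist Vs, where ts="[0,1,2,3,4,5,7,8,6]"])
    using h kn by (simp_all add: rev irr mat_rel_def M1_def)
next
  assume h: "(\<not> A p a \<and> A p b \<and> A p c \<and> A p d \<and> A q a \<and> \<not> A q b \<and> A q c \<and> A q d \<and> A r a \<and> A r b \<and> A r c \<and> \<not> A r d \<and> A a b \<and> \<not> A a c \<and> A a d \<and> A b c \<and> \<not> A b d \<and> A c d)"
  show ?thesis
    apply (rule disjI2, rule disjI2)
    apply (rule iso_lists[OF dist Vs, where ts="[4,3,7,5,8,1,6,0,2]"])
    using h kn by (simp_all add: rev irr mat_rel_def M2_def)
next
  assume h: "(A p a \<and> A p b \<and> A p c \<and> \<not> A p d \<and> \<not> A q a \<and> A q b \<and> A q c \<and> A q d \<and> A r a \<and> \<not> A r b \<and> A r c \<and> A r d \<and> A a b \<and> \<not> A a c \<and> A a d \<and> A b c \<and> \<not> A b d \<and> A c d)"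
  show ?thesis
    apply (rule disjI2, rule disjI2)
    apply (rule iso_lists[OF dist Vs, where ts="[4,3,8,7,5,1,6,0,2]"])
    using h kn by (simp_all add: rev irr mat_rel_def M2_def)
next
  assume h: "(A p a \<and> \<not> A p b \<and> A p c \<and> A p d \<and> A q a \<and> A q b \<and> A q c \<and> \<not> A q d \<and> \<not> A r a \<and> A r b \<and> A r c \<and> A r d \<and> A a b \<and> \<not> A a c \<and> A a d \<and> A b c \<and> \<not> A b d \<and> A c d)"
  show ?thesis
    apply (rule disjI2, rule disjI2)
    apply (rule iso_lists[OF dist Vs, where ts="[4,3,5,8,7,1,6,0,2]"])
    using h kn by (simp_all add: rev irr mat_rel_def M2_def)
next
  assume h: "(A p a \<and> A p b \<and> \<not> A p c \<and> A p d \<and> \<not> A q a \<and> A q b \<and> A q c \<and> A q d \<and> A r a \<and> A r b \<and> A r c \<and> \<not> A r d \<and> \<not> A a b \<and> A a c \<and> A a d \<and> A b c \<and> \<not> A b d \<and> A c d)"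
  show ?thesis
    apply (rule disjI2, rule disjI2)
    apply (rule iso_lists[OF dist Vs, where ts="[4,3,8,7,5,1,0,2,6]"])
    using h kn by (simp_all add: rev irr mat_rel_def M2_def)
next
  assume h: "(\<not> A p a \<and> A p b \<and> A p c \<and> A p d \<and> A q a \<and> A q b \<and> A q c \<and> \<not> A q d \<and> A r a \<and> A r b \<and> \<not> A r c \<and> A r d \<and> \<not> A a b \<and> A a c \<and> A a d \<and> A b c \<and> \<not> A b d \<and> A c d)"
  show ?thesis
    apply (rule disjI2, rule disjI2)
    apply (rule iso_lists[OF dist Vs, where ts="[4,3,7,5,8,1,0,2,6]"])
    using h kn by (simp_all add: rev irr mat_rel_def M2_def)
next
  assume h: "(A p a \<and> A p b \<and> A p c \<and> \<not> A p d \<and> A q a \<and> A q b \<and> \<not> A q c \<and> A q d \<and> \<not> A r a \<and> A r b \<and> A r c \<and> A r d \<and> \<not> A a b \<and> A a c \<and> A a d \<and> A b c \<and> \<not> A b d \<and> A c d)"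
  show ?thesis
    apply (rule disjI2, rule disjI2)
    apply (rule iso_lists[OF dist Vs, where ts="[4,3,5,8,7,1,0,2,6]"])
    using h kn by (simp_all add: rev irr mat_rel_def M2_def)
  qed
qed


lemma cyc_lemma:
  assumes T: "tournament V A" and in3: "x \<in> V" "y \<in> V" "z \<in> V" and ne: "x \<noteq> y" "y \<noteq> z" "x \<noteq> z"
    and h: "A x y \<or> A x z" "A y x \<or> A y z" "A z x \<or> A z y"
  shows "\<exists>p q r. {p,q,r} = {x,y,z} \<and> A p q \<and> A q r \<and> A r p"
proof (cases "A x y")
  case True
  then have "\<not> A y x" using tourD[OF T in3(1,2) ne(1)] by simp
  then have "A y z" using h(2) by simp
  then have "\<not> A z y" using tourD[OF T in3(2,3) ne(2)] by simp
  then have "A z x" using h(3) by simp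
  then show ?thesis using True \<open>A y z\<close> by blast
next
  case False
  then have "A x z" using h(1) by simp
  have "A y x" using False tourD[OF T in3(1,2) ne(1)] by simp
  have "\<not> A z x" using \<open>A x z\<close> tourD[OF T in3(1,3) ne(3)] by simp
  then have "A z y" using h(3) by simp
  have "{x,z,y} = {x,y,z}" by auto
  then show ?thesis using \<open>A x z\<close> \<open>A z y\<close> \<open>A y x\<close> by blast
qed

lemma classify9:
  assumes R: "regular_tournament V A" and n: "card V = 9" and C: "Ccond V A"
    and NN: "\<not> nearly_doubly_regular V A"
  shows "tourn_iso V A DD_V DD_A \<or> tourn_iso V A {0..<9} (mat_rel M1) \<or> tourn_iso V A {0..<9} (mat_rel M2)"
proof -
  define dd where "dd = (card V - 1) div 2"
  note F = reg_facts[OF R, folded dd_def]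
  have dd: "dd = 4" using F(2) n by simp
  have T: "tournament V A" by (rule F(1))
  have fin: "finite V" by (rule tour_fin[OF T])
  have od: "\<forall>v\<in>V. card (out_set V A v) = 4" using F(3) dd unfolding outdeg_def by simp
  have n9: "card V = 4 * 1 + 5" using n by simp
  have le2: "\<forall>p\<in>arcs V A. xs V A p \<le> 2" using C_iff[OF R n] C by simp
  obtain pp where pp: "pp \<in> arcs V A" "\<not> (xs V A pp = 1 \<or> xs V A pp = 1 + 1)"
    using NDR_iff[OF R n9] NN by auto
  have x0: "xs V A pp = 0" using pp le2 by fastforce
  obtain v0 v1 where pe: "pp = (v0, v1)" by force
  have v01: "v0 \<in> V" "v1 \<in> V" "A v0 v1" using pp pe unfolding arcs_def out_set_def by auto
  have fx: "finite (xset V A v0 v1)" using fin unfolding xset_def by auto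
  have xe: "xset V A v0 v1 = {}" using x0 pe card_0_eq[OF fx] by simp
  define O0 where "O0 = out_set V A v0"
  have O0V: "O0 \<subseteq> V" unfolding O0_def out_set_def by auto
  have finO0: "finite O0" using fin O0V finite_subset by blast
  have cO0: "card O0 = 4" using od v01 unfolding O0_def by simp
  have v1O0: "v1 \<in> O0" using v01 unfolding O0_def out_set_def by auto
  have "card (O0 - {v1}) = 3" using cO0 v1O0 finO0 by simp
  then obtain p0 q0 r0 where pqr0: "O0 - {v1} = {p0,q0,r0}" "p0 \<noteq> q0" "q0 \<noteq> r0" "p0 \<noteq> r0"
    by (auto simp: card_3_iff)
  have inO0: "t \<in> V \<and> A v0 t \<and> t \<noteq> v1" if "t \<in> {p0,q0,r0}" for t
    using that pqr0(1) O0V unfolding O0_def out_set_def by blast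
  have v1t: "A v1 t" if "t \<in> {p0,q0,r0}" for t
  proof -
    have t: "t \<in> V" "A v0 t" "t \<noteq> v1" using inO0[OF that] by auto
    have "\<not> A t v1" using xe t unfolding xset_def by auto
    then show ?thesis using tourD[OF T t(1) v01(2) t(3)] by simp
  qed
  have outn: "\<exists>s\<in>{p0,q0,r0}. s \<noteq> t \<and> A t s" if "t \<in> {p0,q0,r0}" for t
  proof -
    have t: "t \<in> V" "A v0 t" "t \<noteq> v1" using inO0[OF that] by auto
    obtain s where s: "s \<in> V" "A v0 s" "A t s" using C t v01 unfolding Ccond_def by blast
    have "s \<in> O0" using s unfolding O0_def out_set_def by auto
    moreover have "s \<noteq> v1"
    proof
      assume "s = v1"
      then have "A t v1" using s by simp
      moreover have "A v1 t" by (rule v1t[OF that])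
      ultimately show False using tourD[OF T t(1) v01(2) t(3)] by simp
    qed
    moreover have "s \<noteq> t" using s tour_irr[OF T t(1)] by auto
    ultimately show ?thesis using pqr0(1) s by blast
  qed
  have inV0: "p0 \<in> V" "q0 \<in> V" "r0 \<in> V" using inO0 by auto
  have "\<exists>p q r. {p,q,r} = {p0,q0,r0} \<and> A p q \<and> A q r \<and> A r p"
  proof (rule cyc_lemma[OF T inV0 pqr0(2,3,4)])
    show "A p0 q0 \<or> A p0 r0" using outn[of p0] pqr0 by auto
    show "A q0 p0 \<or> A q0 r0" using outn[of q0] pqr0 by auto
    show "A r0 p0 \<or> A r0 q0" using outn[of r0] pqr0 by auto
  qed
  then obtain p q r where pqr: "{p,q,r} = {p0,q0,r0}" "A p q" "A q r" "A r p" by blast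
  have O0e: "O0 = {v1,p,q,r}" using pqr(1) pqr0(1) v1O0 by auto
  have pqrV: "p \<in> V" "q \<in> V" "r \<in> V" using pqr(1) inV0 by auto
  have v1pqr: "A v1 p" "A v1 q" "A v1 r" using v1t pqr(1) by auto
  have A0pqr: "A v0 p" "A v0 q" "A v0 r" using O0e unfolding O0_def out_set_def by auto
  have pqrd: "p \<noteq> q" "q \<noteq> r" "p \<noteq> r" using pqr(2,3) tour_irr[OF T] pqrV tourD[OF T pqrV(1) pqrV(3)] pqr(4) by auto
  have pqrv1: "p \<noteq> v1" "q \<noteq> v1" "r \<noteq> v1" using v1pqr tour_irr[OF T] pqrV by auto
  have pqrv0: "p \<noteq> v0" "q \<noteq> v0" "r \<noteq> v0" using A0pqr tour_irr[OF T] pqrV by auto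
  have v01d: "v0 \<noteq> v1" using v01 tour_irr[OF T] by auto
  define O1 where "O1 = out_set V A v1"
  have O1V: "O1 \<subseteq> V" unfolding O1_def out_set_def by auto
  have finO1: "finite O1" using fin O1V finite_subset by blast
  have cO1: "card O1 = 4" using od v01 unfolding O1_def by simp
  have pqrO1: "{p,q,r} \<subseteq> O1" using v1pqr pqrV unfolding O1_def out_set_def by auto
  have cpqr: "card {p,q,r} = 3" using pqrd by simp
  have "card (O1 - {p,q,r}) = 1" using cO1 cpqr pqrO1 finO1 by (simp add: card_Diff_subset)
  then obtain a where a: "O1 - {p,q,r} = {a}" by (auto simp: card_1_singleton_iff)
  have aV: "a \<in> V" "A v1 a" "a \<notin> {p,q,r}" using a O1V unfolding O1_def out_set_def by auto
  have O1e: "O1 = {p,q,r,a}" using a pqrO1 by auto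
  have av0: "a \<noteq> v0"
  proof
    assume "a = v0" then have "A v1 v0" using aV by simp
    then show False using v01 tourD[OF T v01(1,2) v01d] by simp
  qed
  have av1: "a \<noteq> v1" using aV tour_irr[OF T] by auto
  define Rest where "Rest = V - {v0,v1,p,q,r,a}"
  have ap: "p \<noteq> a" "q \<noteq> a" "r \<noteq> a" "v0 \<noteq> a" "v1 \<noteq> a" using aV(3) av0 av1 by auto
  have c6: "card {v0,v1,p,q,r,a} = 6" using pqrd pqrv1 pqrv0 v01d ap by simp
  have sub6: "{v0,v1,p,q,r,a} \<subseteq> V" using v01 pqrV aV by auto
  have "card Rest = 3" unfolding Rest_def using c6 sub6 n fin by (simp add: card_Diff_subset)
  then obtain b c d where bcd: "Rest = {b,c,d}" "b \<noteq> c" "c \<noteq> d" "b \<noteq> d" by (auto simp: card_3_iff)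
  have bcdV: "b \<in> V" "c \<in> V" "d \<in> V" "b \<notin> {v0,v1,p,q,r,a}" "c \<notin> {v0,v1,p,q,r,a}" "d \<notin> {v0,v1,p,q,r,a}"
    using bcd(1) unfolding Rest_def by auto
  have Vs: "set [v0,v1,p,q,r,a,b,c,d] = V" using bcd(1) sub6 unfolding Rest_def by auto
  have dist: "distinct [v0,v1,p,q,r,a,b,c,d]"
    using pqrd pqrv1 pqrv0 v01d av0 av1 aV(3) bcd(2,3,4) bcdV(4,5,6) by auto
  have inV: "v0 \<in> V" "v1 \<in> V" "p \<in> V" "q \<in> V" "r \<in> V" "a \<in> V" "b \<in> V" "c \<in> V" "d \<in> V"
    using v01 pqrV aV bcdV by auto
  have r1: "A v1 v0 = (\<not> A v0 v1)" by (rule tourD[OF T]) (use inV dist in auto)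
  have r2: "A p v0 = (\<not> A v0 p)" by (rule tourD[OF T]) (use inV dist in auto)
  have r3: "A q v0 = (\<not> A v0 q)" by (rule tourD[OF T]) (use inV dist in auto)
  have r4: "A r v0 = (\<not> A v0 r)" by (rule tourD[OF T]) (use inV dist in auto)
  have r5: "A a v0 = (\<not> A v0 a)" by (rule tourD[OF T]) (use inV dist in auto)
  have r6: "A b v0 = (\<not> A v0 b)" by (rule tourD[OF T]) (use inV dist in auto)
  have r7: "A c v0 = (\<not> A v0 c)" by (rule tourD[OF T]) (use inV dist in auto)
  have r8: "A d v0 = (\<not> A v0 d)" by (rule tourD[OF T]) (use inV dist in auto)
  have r9: "A p v1 = (\<not> A v1 p)" by (rule tourD[OF T]) (use inV dist in auto)
  have r10: "A q v1 = (\<not> A v1 q)" by (rule tourD[OF T]) (use inV dist in auto)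
  have r11: "A r v1 = (\<not> A v1 r)" by (rule tourD[OF T]) (use inV dist in auto)
  have r12: "A a v1 = (\<not> A v1 a)" by (rule tourD[OF T]) (use inV dist in auto)
  have r13: "A b v1 = (\<not> A v1 b)" by (rule tourD[OF T]) (use inV dist in auto)
  have r14: "A c v1 = (\<not> A v1 c)" by (rule tourD[OF T]) (use inV dist in auto)
  have r15: "A d v1 = (\<not> A v1 d)" by (rule tourD[OF T]) (use inV dist in auto)
  have r16: "A q p = (\<not> A p q)" by (rule tourD[OF T]) (use inV dist in auto)
  have r17: "A r p = (\<not> A p r)" by (rule tourD[OF T]) (use inV dist in auto)
  have r18: "A a p = (\<not> A p a)" by (rule tourD[OF T]) (use inV dist in auto)
  have r19: "A b p = (\<not> A p b)" by (rule tourD[OF T]) (use inV dist in auto)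
  have r20: "A c p = (\<not> A p c)" by (rule tourD[OF T]) (use inV dist in auto)
  have r21: "A d p = (\<not> A p d)" by (rule tourD[OF T]) (use inV dist in auto)
  have r22: "A r q = (\<not> A q r)" by (rule tourD[OF T]) (use inV dist in auto)
  have r23: "A a q = (\<not> A q a)" by (rule tourD[OF T]) (use inV dist in auto)
  have r24: "A b q = (\<not> A q b)" by (rule tourD[OF T]) (use inV dist in auto)
  have r25: "A c q = (\<not> A q c)" by (rule tourD[OF T]) (use inV dist in auto)
  have r26: "A d q = (\<not> A q d)" by (rule tourD[OF T]) (use inV dist in auto)
  have r27: "A a r = (\<not> A r a)" by (rule tourD[OF T]) (use inV dist in auto)
  have r28: "A b r = (\<not> A r b)" by (rule tourD[OF T]) (use inV dist in auto)
  have r29: "A c r = (\<not> A r c)" by (rule tourD[OF T]) (use inV dist in auto)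
  have r30: "A d r = (\<not> A r d)" by (rule tourD[OF T]) (use inV dist in auto)
  have r31: "A b a = (\<not> A a b)" by (rule tourD[OF T]) (use inV dist in auto)
  have r32: "A c a = (\<not> A a c)" by (rule tourD[OF T]) (use inV dist in auto)
  have r33: "A d a = (\<not> A a d)" by (rule tourD[OF T]) (use inV dist in auto)
  have r34: "A c b = (\<not> A b c)" by (rule tourD[OF T]) (use inV dist in auto)
  have r35: "A d b = (\<not> A b d)" by (rule tourD[OF T]) (use inV dist in auto)
  have r36: "A d c = (\<not> A c d)" by (rule tourD[OF T]) (use inV dist in auto)
  note rev = r1 r2 r3 r4 r5 r6 r7 r8 r9 r10 r11 r12 r13 r14 r15 r16 r17 r18 r19 r20 r21 r22 r23 r24 r25 r26 r27 r28 r29 r30 r31 r32 r33 r34 r35 r36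
  have irr: "\<not> A v0 v0" "\<not> A v1 v1" "\<not> A p p" "\<not> A q q" "\<not> A r r" "\<not> A a a" "\<not> A b b" "\<not> A c c" "\<not> A d d"
    using tour_irr[OF T] inV by auto
  have m0: "t \<in> {v1,p,q,r}" if "t \<in> V" "A v0 t" for t
  proof -
    have "t \<in> O0" unfolding O0_def out_set_def using that by simp
    then show ?thesis using O0e by simp
  qed
  have m1: "t \<in> {p,q,r,a}" if "t \<in> V" "A v1 t" for t
  proof -
    have "t \<in> O1" unfolding O1_def out_set_def using that by simp
    then show ?thesis using O1e by simp
  qed
  have dd': "a \<notin> {v1,p,q,r}" "b \<notin> {v1,p,q,r}" "c \<notin> {v1,p,q,r}" "d \<notin> {v1,p,q,r}"
     "b \<notin> {p,q,r,a}" "c \<notin> {p,q,r,a}" "d \<notin> {p,q,r,a}" using dist by auto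
  have n0: "\<not> A v0 a" "\<not> A v0 b" "\<not> A v0 c" "\<not> A v0 d"
    using m0 inV dd' by blast+
  have n1: "\<not> A v1 b" "\<not> A v1 c" "\<not> A v1 d"
    using m1 inV dd' by blast+
  have npr: "\<not> A p r" using pqr(4) tourD[OF T pqrV(1) pqrV(3) pqrd(3)] by simp
  have kn: "A v0 v1" "A v0 p" "A v0 q" "A v0 r" "\<not> A v0 a" "\<not> A v0 b" "\<not> A v0 c" "\<not> A v0 d" "A v1 p" "A v1 q" "A v1 r" "A v1 a" "\<not> A v1 b" "\<not> A v1 c" "\<not> A v1 d" "A p q" "\<not> A p r" "A q r"
    using v01 A0pqr n0 v1pqr aV n1 pqr npr by auto
  have deg: "\<forall>x\<in>{v0,v1,p,q,r,a,b,c,d}. sum_list (map (\<lambda>y. if A x y then 1 else 0) [v0,v1,p,q,r,a,b,c,d]) = (4::int)"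
  proof
    fix x assume x: "x \<in> {v0,v1,p,q,r,a,b,c,d}"
    have "int (card {y \<in> set [v0,v1,p,q,r,a,b,c,d]. A x y}) = sum_list (map (\<lambda>y. if A x y then 1 else 0) [v0,v1,p,q,r,a,b,c,d])"
      by (rule card_list_int[OF dist])
    moreover have "{y \<in> set [v0,v1,p,q,r,a,b,c,d]. A x y} = out_set V A x" unfolding Vs out_set_def by simp
    moreover have "x \<in> V" using x Vs by auto
    ultimately show "sum_list (map (\<lambda>y. if A x y then 1 else 0) [v0,v1,p,q,r,a,b,c,d]) = (4::int)"
      using od by simp
  qed
  have C': "Ccond {v0,v1,p,q,r,a,b,c,d} A" using C Vs by simp
  show ?thesis by (rule cases9[OF rev irr kn deg C' dist Vs])
qed

lemma iso_card: "tourn_iso V A W B \<Longrightarrow> card V = card W"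
  unfolding tourn_iso_def by (metis bij_betw_same_card)

lemma card_DD: "card DD_V = 9" unfolding DD_V_def by simp

lemma one_case:
  assumes R: "regular_tournament V A" and n: "card V = 1"
  shows "s5 V A = 0" "nearly_doubly_regular V A"
proof -
  have T: "tournament V A" using R unfolding regular_tournament_def by auto
  obtain v where V: "V = {v}" using n by (auto simp: card_1_singleton_iff)
  have E: "{S. S \<subseteq> V \<and> card S = 5 \<and> strong_on S A} = {}"
  proof (rule equals0I)
    fix S assume "S \<in> {S. S \<subseteq> V \<and> card S = 5 \<and> strong_on S A}"
    then have "S \<subseteq> V" "card S = 5" by auto
    then have "card S \<le> 1" using card_mono[of V S] n V by simp
    then show False using \<open>card S = 5\<close> by simp
  qed
  show "s5 V A = 0" unfolding s5_def E by simp
  have "out_set V A v = {}" using tour_irr[OF T] V unfolding out_set_def by auto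
  then have "\<forall>u\<in>V. near_regular_on (out_set V A u) A" using V unfolding near_regular_on_def by simp
  then show "nearly_doubly_regular V A" unfolding nearly_doubly_regular_def using R n by simp
qed

theorem proposition2:
  fixes V :: "'a set" and A :: "'a \<Rightarrow> 'a \<Rightarrow> bool"
  assumes "regular_tournament V A"
  shows "(card V mod 4 = 3 \<longrightarrow>
            (let n = real (card V);
                 b = n * (n + 1) * (n - 1) * (n - 3) * (17 * n - 59) / 3840
             in b \<le> real (s5 V A) \<and>
                (real (s5 V A) = b \<longleftrightarrow> doubly_regular V A \<or> card V = 7)))
       \<and> (card V mod 4 = 1 \<longrightarrow>
            (let n = real (card V);
                 b = n * (n - 1) * (17 * n ^ 3 - 93 * n ^ 2 + 127 * n - 243) / 3840
             in b \<le> real (s5 V A) \<and>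
                (real (s5 V A) = b \<longleftrightarrow>
                   nearly_doubly_regular V A \<or> tourn_iso V A DD_V DD_A \<or>
                   tourn_iso V A {0..<9} (mat_rel M1) \<or>
                   tourn_iso V A {0..<9} (mat_rel M2))))"
proof (intro conjI impI)
  note R = assms
  assume m3: "card V mod 4 = 3"
  have "card V = 4 * (card V div 4) + 3" using m3 by presburger
  from case3[OF R this] show "let n = real (card V);
                 b = n * (n + 1) * (n - 1) * (n - 3) * (17 * n - 59) / 3840
             in b \<le> real (s5 V A) \<and>
                (real (s5 V A) = b \<longleftrightarrow> doubly_regular V A \<or> card V = 7)" .
next
  note R = assms
  assume m1: "card V mod 4 = 1"
  define bb where "bb = real (card V) * (real (card V) - 1) * (17 * real (card V) ^ 3 - 93 * real (card V) ^ 2 + 127 * real (card V) - 243) / 3840"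
  have goal: "bb \<le> real (s5 V A) \<and> (real (s5 V A) = bb \<longleftrightarrow>
                   nearly_doubly_regular V A \<or> tourn_iso V A DD_V DD_A \<or>
                   tourn_iso V A {0..<9} (mat_rel M1) \<or>
                   tourn_iso V A {0..<9} (mat_rel M2))"
  proof (cases "card V = 1")
    case True
    have "bb = 0" unfolding bb_def using True by simp
    then show ?thesis using one_case[OF R True] by simp
  next
    case False
    define m where "m = (card V - 5) div 4"
    have n: "card V = 4 * m + 5" using m1 False unfolding m_def by presburger
    note c = case1[OF R n, folded bb_def]
    show ?thesis
    proof (cases "m = 1")
      case False
      have "\<not> tourn_iso V A DD_V DD_A" "\<not> tourn_iso V A {0..<9} (mat_rel M1)" "\<not> tourn_iso V A {0..<9} (mat_rel M2)"
        using iso_card[of V A] card_DD n False by fastforce+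
      then show ?thesis using c(1) c(2)[OF False] by simp
    next
      case True
      have n9: "card V = 9" using n True by simp
      have "real (s5 V A) = bb \<longleftrightarrow> Ccond V A" using c(3)[OF True] C_iff[OF R n9] by simp
      also have "\<dots> \<longleftrightarrow> nearly_doubly_regular V A \<or> tourn_iso V A DD_V DD_A \<or>
                   tourn_iso V A {0..<9} (mat_rel M1) \<or> tourn_iso V A {0..<9} (mat_rel M2)"
      proof
        assume C: "Ccond V A"
        show "nearly_doubly_regular V A \<or> tourn_iso V A DD_V DD_A \<or>
                   tourn_iso V A {0..<9} (mat_rel M1) \<or> tourn_iso V A {0..<9} (mat_rel M2)"
          using classify9[OF R n9 C] by blast
      next
        assume h: "nearly_doubly_regular V A \<or> tourn_iso V A DD_V DD_A \<or>
                   tourn_iso V A {0..<9} (mat_rel M1) \<or> tourn_iso V A {0..<9} (mat_rel M2)"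
        show "Ccond V A"
        proof -
          have n9': "card V = 4 * 1 + 5" using n9 by simp
          {
            assume N: "nearly_doubly_regular V A"
            have "\<forall>p\<in>arcs V A. xs V A p \<le> 2" using NDR_iff[OF R n9'] N by fastforce
            then have ?thesis using C_iff[OF R n9] by simp
          }
          moreover {
            assume "tourn_iso V A DD_V DD_A" then have ?thesis using C_iso C_DD by blast
          }
          moreover {
            assume "tourn_iso V A {0..<9} (mat_rel M1)" then have ?thesis using C_iso C_M1 by blast
          }
          moreover {
            assume "tourn_iso V A {0..<9} (mat_rel M2)" then have ?thesis using C_iso C_M2 by blast
          }
          ultimately show ?thesis using h by blast
        qed
      qed
      finally show ?thesis using c(1) by simp
    qed
  qed
  then show "let n = real (card V);
                 b = n * (n - 1) * (17 * n ^ 3 - 93 * n ^ 2 + 127 * n - 243) / 3840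
             in b \<le> real (s5 V A) \<and>
                (real (s5 V A) = b \<longleftrightarrow>
                   nearly_doubly_regular V A \<or> tourn_iso V A DD_V DD_A \<or>
                   tourn_iso V A {0..<9} (mat_rel M1) \<or>
                   tourn_iso V A {0..<9} (mat_rel M2))" unfolding Let_def bb_def .
qed

end
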